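(* Assume (C1) and (C2). Let $m_*:=\inf_{u\in\mathcal{M}}I(u)$. If $u_0\in\mathcal{M}$ and $I(u_0)=m_*$, then $u_0$ is a critical point of $I$, i.e. $\langle I'(u_0),v\rangle=0$ for all $v\in\mathcal{D}$.
   Context: Fix real numbers $p,q,r$ with $1<p<q$, $\frac p2$ a positive integer, and $r\ge1$, and functions $a,b,c:\mathbb{Z}\to(0,+\infty)$. Conditions: - (C1) There is $b_0>0$ with $b(n)\ge b_0$ for all $n$ and $b(n)\to+\infty$ as $|n|\to\infty$. - (C2) There is $c_0>0$ with $c(n)\le c_0$ for all $n$ and $\sum_n c(n)<+\infty$. Notation for a real sequence $u=(u(n))_{n\in\mathbb{Z}}$: $\Delta u(n)=u(n+1)-u(n)$, $u^+(n)=\max\{u(n),0\}$, $u^-(n)=\min\{u(n),0\}$. Spaces: - $E$ is the set of real sequences $u$ with $\|u\|:=\big(\sum_n[a(n)|\Delta u(n)|^p+b(n)|u(n)|^p]\big)^{1/p}<\infty$. - $\mathcal{D}=\{u\in E:\sum_n c(n)|u(n)|^q\ln|u(n)|^r<+\infty\}$, where terms with $u(n)=0$ are read as $0$. It carries the norm $\|\cdot\|$. For $u,v\in\mathcal{D}$: - $I(u)=\frac1p\|u\|^p+\frac{r}{q^2}\sum_n c(n)|u(n)|^q-\frac1q\sum_n c(n)|u(n)|^q\ln|u(n)|^r$. - $\langle I'(u),v\rangle=\sum_n[a(n)|\Delta u(n)|^{p-2}\Delta u(n)\Delta v(n)+b(n)|u(n)|^{p-2}u(n)v(n)]-\sum_n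 c(n)|u(n)|^{q-2}u(n)v(n)\ln|u(n)|^r$. $\mathcal{M}=\{u\in\mathcal{D}:u^+\ne0,\ u^-\neq0,\ \langle I'(u),u^+\rangle=0,\ \langle I'(u),u^-\rangle=0\}$. *)

theory Defs
  imports "HOL-Analysis.Analysis"
begin

definition fdiff :: "(int \<Rightarrow> real) \<Rightarrow> int \<Rightarrow> real" where
  "fdiff u n = u (n + 1) - u n"

definition posp :: "(int \<Rightarrow> real) \<Rightarrow> int \<Rightarrow> real" where
  "posp u n = max (u n) 0"

definition negp :: "(int \<Rightarrow> real) \<Rightarrow> int \<Rightarrow> real" where
  "negp u n = min (u n) 0"

definition Eterm :: "real \<Rightarrow> (int \<Rightarrow> real) \<Rightarrow> (int \<Rightarrow> real) \<Rightarrow> (int \<Rightarrow> real) \<Rightarrow> int \<Rightarrow> real" where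
  "Eterm p a b u n = a n * \<bar>fdiff u n\<bar> powr p + b n * \<bar>u n\<bar> powr p"

definition Espace :: "real \<Rightarrow> (int \<Rightarrow> real) \<Rightarrow> (int \<Rightarrow> real) \<Rightarrow> (int \<Rightarrow> real) set" where
  "Espace p a b = {u. Eterm p a b u summable_on UNIV}"

definition Enorm :: "real \<Rightarrow> (int \<Rightarrow> real) \<Rightarrow> (int \<Rightarrow> real) \<Rightarrow> (int \<Rightarrow> real) \<Rightarrow> real" where
  "Enorm p a b u = (\<Sum>\<^sub>\<infinity>n. Eterm p a b u n) powr (1 / p)"

text \<open>c(n) |u(n)|^q ln(|u(n)|^r); for u(n) = 0 this is 0 since 0 powr q = 0.\<close>
definition logterm :: "real \<Rightarrow> real \<Rightarrow> (int \<Rightarrow> real) \<Rightarrow> (int \<Rightarrow> real) \<Rightarrow> int \<Rightarrow> real" where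
  "logterm q r c u n = (if u n = 0 then 0 else c n * \<bar>u n\<bar> powr q * ln (\<bar>u n\<bar> powr r))"

definition Dspace :: "real \<Rightarrow> real \<Rightarrow> real \<Rightarrow> (int \<Rightarrow> real) \<Rightarrow> (int \<Rightarrow> real) \<Rightarrow> (int \<Rightarrow> real) \<Rightarrow> (int \<Rightarrow> real) set" where
  "Dspace p q r a b c = {u \<in> Espace p a b. logterm q r c u summable_on UNIV}"

definition Ifun :: "real \<Rightarrow> real \<Rightarrow> real \<Rightarrow> (int \<Rightarrow> real) \<Rightarrow> (int \<Rightarrow> real) \<Rightarrow> (int \<Rightarrow> real) \<Rightarrow> (int \<Rightarrow> real) \<Rightarrow> real" where
  "Ifun p q r a b c u =
     (1 / p) * (Enorm p a b u) powr p
     + (r / q\<^sup>2) * (\<Sum>\<^sub>\<infinity>n. c n * \<bar>u n\<bar> powr q)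
     - (1 / q) * (\<Sum>\<^sub>\<infinity>n. logterm q r c u n)"

definition dIfun :: "real \<Rightarrow> real \<Rightarrow> real \<Rightarrow> (int \<Rightarrow> real) \<Rightarrow> (int \<Rightarrow> real) \<Rightarrow> (int \<Rightarrow> real) \<Rightarrow> (int \<Rightarrow> real) \<Rightarrow> (int \<Rightarrow> real) \<Rightarrow> real" where
  "dIfun p q r a b c u v =
     (\<Sum>\<^sub>\<infinity>n. a n * \<bar>fdiff u n\<bar> powr (p - 2) * fdiff u n * fdiff v n
            + b n * \<bar>u n\<bar> powr (p - 2) * u n * v n)
     - (\<Sum>\<^sub>\<infinity>n. (if u n = 0 then 0 else
            c n * \<bar>u n\<bar> powr (q - 2) * u n * v n * ln (\<bar>u n\<bar> powr r)))"

definition Mset :: "real \<Rightarrow> real \<Rightarrow> real \<Rightarrow> (int \<Rightarrow> real) \<Rightarrow> (int \<Rightarrow> real) \<Rightarrow> (int \<Rightarrow> real) \<Rightarrow> (int \<Rightarrow> real) set" where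
  "Mset p q r a b c = {u \<in> Dspace p q r a b c. posp u \<noteq> (\<lambda>_. 0) \<and> negp u \<noteq> (\<lambda>_. 0)
      \<and> dIfun p q r a b c u (posp u) = 0 \<and> dIfun p q r a b c u (negp u) = 0}"

end

theory Submission
  imports Defs
begin

lemma x_ln_bound:
  fixes x e :: real assumes "0 < x" "x \<le> 1" "0 < e"
  shows "\<bar>x powr e * ln x\<bar> \<le> (2/e) * x powr (e/2)"
proof -
  have "ln (1/x) \<le> (1/x) powr (e/2) / (e/2)"
    using assms by (intro ln_powr_bound) auto
  moreover have "(1/x) powr (e/2) = x powr (-(e/2))"
    using assms by (simp add: powr_divide powr_minus_divide)
  ultimately have "- ln x \<le> (2/e) * x powr (-(e/2))"
    using assms by (simp add: ln_div mult.commute)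
  hence "x powr e * (- ln x) \<le> x powr e * ((2/e) * x powr (-(e/2)))"
    by (intro mult_left_mono) auto
  also have "\<dots> = (2/e) * (x powr e * x powr (-(e/2)))" by simp
  also have "x powr e * x powr (-(e/2)) = x powr (e/2)"
    by (simp add: powr_add[symmetric])
  finally have "x powr e * (- ln x) \<le> (2/e) * x powr (e/2)" by simp
  moreover have "ln x \<le> 0" using assms by simp
  hence "x powr e * ln x \<le> 0" by (simp add: mult_nonneg_nonpos)
  ultimately show ?thesis by linarith
qed

lemma x_ln_bound2:
  fixes x e :: real assumes "0 < x" "0 < e"
  shows "\<bar>x powr e * ln x\<bar> \<le> 2/e + x powr (e+1)"
proof (cases "x \<le> 1")
  case True
  have "x powr (e/2) \<le> 1" using True assms powr_mono2[of "e/2" x 1] by simp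
  hence "(2/e) * x powr (e/2) \<le> 2/e" using assms by (simp add: divide_simps)
  moreover have "0 \<le> x powr (e+1)" by simp
  ultimately show ?thesis using x_ln_bound[OF assms(1) True assms(2)] by linarith
next
  case False
  have "0 \<le> ln x" "ln x \<le> x" using False by (auto intro: order.trans[OF ln_le_minus_one])
  hence "\<bar>x powr e * ln x\<bar> \<le> x powr e * x" by (simp add: mult_left_mono)
  also have "\<dots> = x powr (e+1)" using assms by (simp add: powr_add)
  moreover have "0 \<le> 2/e" using assms by simp
  ultimately show ?thesis by linarith
qed

locale LS =
  fixes p q r :: real and P :: nat and a b c :: "int \<Rightarrow> real" and b0 :: real
  assumes pP: "p = real P" and evP: "even P" and P2: "2 \<le> P" and pq: "p < q"
    and r1: "1 \<le> r" and apos: "\<And>n. 0 < a n" and bpos: "\<And>n. 0 < b n" and cpos: "\<And>n. 0 < c n"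
    and b0pos: "0 < b0" and b0le: "\<And>n. b0 \<le> b n" and csum: "c summable_on UNIV"
begin

lemma q2: "2 < q" using pP P2 pq by linarith
lemma q1: "1 < q" using q2 by linarith
lemma qpos: "0 < q" using q2 by linarith
lemma rpos: "0 < r" using r1 by linarith
lemma ppos: "0 < p" using pP P2 by linarith

lemma powr_m1: "0 < (x::real) \<Longrightarrow> x powr e = x powr (e-1) * x"
proof -
  assume x: "0 < x"
  have "x powr e = x powr ((e-1) + 1)" by simp
  also have "\<dots> = x powr (e-1) * x powr 1" by (rule powr_add)
  finally show ?thesis using x by simp
qed

definition Lf :: "real \<Rightarrow> real" where
  "Lf w = (if w = 0 then 0 else \<bar>w\<bar> powr (q-2) * w * ln (\<bar>w\<bar> powr r))"
definition Hf :: "real \<Rightarrow> real" where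
  "Hf w = (if w = 0 then 0 else \<bar>w\<bar> powr q * ln (\<bar>w\<bar> powr r))"
definition Cf :: "real \<Rightarrow> real" where
  "Cf w = r / q\<^sup>2 * \<bar>w\<bar> powr q - Hf w / q"
definition LB :: "real \<Rightarrow> real" where
  "LB x = 2/(q-1) + x powr q"

lemma LB_mono: "0 \<le> x \<Longrightarrow> x \<le> y \<Longrightarrow> LB x \<le> LB y"
  unfolding LB_def using qpos by (simp add: powr_mono2)

lemma LB_pos: "0 < LB x"
  unfolding LB_def using q1 by (simp add: add_pos_nonneg)

lemma Lf_alt: "w \<noteq> 0 \<Longrightarrow> \<bar>Lf w\<bar> = r * \<bar>\<bar>w\<bar> powr (q-1) * ln \<bar>w\<bar>\<bar>"
proof -
  assume w: "w \<noteq> 0"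
  have "\<bar>w\<bar> powr (q-2) * \<bar>w\<bar> = \<bar>w\<bar> powr (q-1)"
    using w powr_m1[of "\<bar>w\<bar>" "q-1"] by simp
  thus ?thesis using w rpos unfolding Lf_def
    by (simp add: abs_mult)
qed

lemma Lf_bound: "\<bar>Lf w\<bar> \<le> r * LB \<bar>w\<bar>"
proof (cases "w = 0")
  case True thus ?thesis using LB_pos[of 0] rpos by (simp add: Lf_def)
next
  case False
  have "\<bar>\<bar>w\<bar> powr (q-1) * ln \<bar>w\<bar>\<bar> \<le> 2/(q-1) + \<bar>w\<bar> powr (q-1+1)"
    using False q1 by (intro x_ln_bound2) auto
  thus ?thesis using Lf_alt[OF False] rpos unfolding LB_def by simp
qed

lemma Lf_small: "w \<noteq> 0 \<Longrightarrow> \<bar>w\<bar> \<le> 1 \<Longrightarrow> \<bar>Lf w\<bar> \<le> r * ((2/(q-1)) * \<bar>w\<bar> powr ((q-1)/2))"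
proof -
  assume w: "w \<noteq> 0" "\<bar>w\<bar> \<le> 1"
  have "\<bar>\<bar>w\<bar> powr (q-1) * ln \<bar>w\<bar>\<bar> \<le> (2/(q-1)) * \<bar>w\<bar> powr ((q-1)/2)"
    using w q1 by (intro x_ln_bound) auto
  hence "r * \<bar>\<bar>w\<bar> powr (q-1) * ln \<bar>w\<bar>\<bar> \<le> r * ((2/(q-1)) * \<bar>w\<bar> powr ((q-1)/2))"
    by (rule mult_left_mono) (use rpos in simp)
  thus ?thesis using Lf_alt[OF w(1)] by simp
qed

lemma Lf_neg: "Lf (-w) = - Lf w" by (simp add: Lf_def)
lemma Hf_neg: "Hf (-w) = Hf w" by (simp add: Hf_def)
lemma Cf_neg: "Cf (-w) = Cf w" by (simp add: Cf_def Hf_neg)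

lemma Lf_cont: "continuous_on UNIV Lf"
proof -
  have c1: "continuous_on (UNIV - {0}) Lf"
  proof -
    have "continuous_on (UNIV - {0}) (\<lambda>w. \<bar>w\<bar> powr (q-2) * w * ln (\<bar>w\<bar> powr r))"
      by (intro continuous_intros) auto
    thus ?thesis by (rule continuous_on_cong[THEN iffD1, rotated -1]) (auto simp: Lf_def)
  qed
  have c0: "isCont Lf 0"
  proof -
    have "(Lf \<longlongrightarrow> 0) (at 0)"
    proof (rule Lim_null_comparison)
      show "\<forall>\<^sub>F x in at 0. norm (Lf x) \<le> r * ((2/(q-1)) * \<bar>x\<bar> powr ((q-1)/2))"
        unfolding eventually_at
      proof (rule exI[of _ 1], safe)
        fix x :: real assume "x \<noteq> 0" "dist x 0 < 1"
        thus "norm (Lf x) \<le> r * ((2/(q-1)) * \<bar>x\<bar> powr ((q-1)/2))"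
          using Lf_small[of x] by simp
      qed simp
      show "((\<lambda>x. r * ((2/(q-1)) * \<bar>x\<bar> powr ((q-1)/2))) \<longlongrightarrow> 0) (at 0)"
        using q1 by (auto intro!: tendsto_eq_intros tendsto_zero_powrI)
    qed
    thus ?thesis unfolding isCont_def by (simp add: Lf_def)
  qed
  show ?thesis
  proof (rule continuous_at_imp_continuous_on, intro ballI)
    fix x :: real assume "x \<in> UNIV"
    show "isCont Lf x"
    proof (cases "x = 0")
      case True thus ?thesis using c0 by simp
    next
      case False
      thus ?thesis using c1 continuous_on_eq_continuous_at[of "UNIV - {0}" Lf] by auto
    qed
  qed
qed

lemma Cf_deriv_pos:
  assumes w: "0 < w" shows "(Cf has_real_derivative (- Lf w)) (at w)"
proof -
  let ?g = "\<lambda>x::real. r / q\<^sup>2 * x powr q - (x powr q * (r * ln x)) / q"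
  have "(?g has_real_derivative (r / q\<^sup>2 * (q * w powr (q - 1)) - ((q * w powr (q - 1)) * (r * ln w) + w powr q * (r * (1 / w))) / q)) (at w)"
    using w qpos by (intro derivative_eq_intros) auto
  moreover have "(r / q\<^sup>2 * (q * w powr (q - 1)) - ((q * w powr (q - 1)) * (r * ln w) + w powr q * (r * (1 / w))) / q) = - Lf w"
  proof -
    have e1: "w powr q * (1/w) = w powr (q-1)" using w by (simp add: powr_diff)
    have e2: "w powr (q-2) * w = w powr (q-1)" using w powr_m1[of w "q-1"] by simp
    have "(r / q\<^sup>2 * (q * w powr (q - 1)) - ((q * w powr (q - 1)) * (r * ln w) + w powr q * (r * (1 / w))) / q)
        = r/q * w powr (q-1) - r * w powr (q-1) * ln w - r/q * (w powr q * (1/w))"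
      using qpos by (simp add: power2_eq_square field_simps)
    also have "\<dots> = - (r * (w powr (q-2) * w) * ln w)" unfolding e1 e2 by simp
    also have "\<dots> = - Lf w" using w by (simp add: Lf_def)
    finally show ?thesis .
  qed
  ultimately have "(?g has_real_derivative (- Lf w)) (at w)" by simp
  thus ?thesis
    by (rule has_field_derivative_transform_within_open[of _ _ _ "{0<..}"])
       (use w in \<open>auto simp: Cf_def Hf_def\<close>)
qed

lemma Cf_bound: "\<bar>Cf y\<bar> \<le> \<bar>y\<bar> * (r/q\<^sup>2 * \<bar>y\<bar> powr (q-1) + r/q * \<bar>\<bar>y\<bar> powr (q-1) * ln \<bar>y\<bar>\<bar>)"
proof (cases "y = 0")
  case True thus ?thesis by (simp add: Cf_def Hf_def)
next
  case False
  have e: "\<bar>y\<bar> powr q = \<bar>y\<bar> * \<bar>y\<bar> powr (q-1)" using False powr_m1[of "\<bar>y\<bar>" q] by simp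
  have "\<bar>Cf y\<bar> \<le> r/q\<^sup>2 * \<bar>y\<bar> powr q + \<bar>Hf y\<bar> / q"
    unfolding Cf_def using rpos qpos abs_triangle_ineq4[of "r / q\<^sup>2 * \<bar>y\<bar> powr q" "Hf y / q"]
    by (simp add: abs_divide abs_mult)
  also have "\<bar>Hf y\<bar> = r * \<bar>y\<bar> * \<bar>\<bar>y\<bar> powr (q-1) * ln \<bar>y\<bar>\<bar>"
    using False rpos unfolding Hf_def by (simp add: e abs_mult)
  finally show ?thesis using qpos rpos by (simp add: e algebra_simps)
qed

lemma Cf_deriv0: "(Cf has_real_derivative (- Lf 0)) (at 0)"
proof -
  have "((\<lambda>y. (Cf y - Cf 0) / (y - 0)) \<longlongrightarrow> 0) (at 0)"
  proof (rule Lim_null_comparison)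
    show "\<forall>\<^sub>F y in at 0. norm ((Cf y - Cf 0) / (y - 0)) \<le>
        r/q\<^sup>2 * \<bar>y\<bar> powr (q-1) + r/q * ((2/(q-1)) * \<bar>y\<bar> powr ((q-1)/2))"
      unfolding eventually_at
    proof (rule exI[of _ 1], safe)
      fix y :: real assume y: "y \<noteq> 0" "dist y 0 < 1"
      have n: "norm ((Cf y - Cf 0) / (y - 0)) = \<bar>Cf y\<bar> / \<bar>y\<bar>"
        by (simp add: Cf_def Hf_def abs_divide)
      have "\<bar>Cf y\<bar> / \<bar>y\<bar> \<le> r/q\<^sup>2 * \<bar>y\<bar> powr (q-1) + r/q * \<bar>\<bar>y\<bar> powr (q-1) * ln \<bar>y\<bar>\<bar>"
        using Cf_bound[of y] y by (simp add: divide_simps mult.commute)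
      moreover have "\<bar>\<bar>y\<bar> powr (q-1) * ln \<bar>y\<bar>\<bar> \<le> (2/(q-1)) * \<bar>y\<bar> powr ((q-1)/2)"
        using y q1 by (intro x_ln_bound) auto
      hence "r/q * \<bar>\<bar>y\<bar> powr (q-1) * ln \<bar>y\<bar>\<bar> \<le> r/q * ((2/(q-1)) * \<bar>y\<bar> powr ((q-1)/2))"
        using rpos qpos by (intro mult_left_mono) auto
      ultimately show "norm ((Cf y - Cf 0) / (y - 0)) \<le> r/q\<^sup>2 * \<bar>y\<bar> powr (q-1) + r/q * ((2/(q-1)) * \<bar>y\<bar> powr ((q-1)/2))"
        unfolding n by linarith
    qed simp
    show "((\<lambda>y. r/q\<^sup>2 * \<bar>y\<bar> powr (q-1) + r/q * ((2/(q-1)) * \<bar>y\<bar> powr ((q-1)/2))) \<longlongrightarrow> 0) (at 0)"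
      using q1 by (auto intro!: tendsto_eq_intros tendsto_zero_powrI)
  qed
  thus ?thesis by (simp add: has_field_derivative_iff Lf_def)
qed

lemma Cf_deriv: "(Cf has_real_derivative (- Lf w)) (at w)"
proof -
  consider "w = 0" | "0 < w" | "w < 0" by linarith
  thus ?thesis
  proof cases
    case 1 thus ?thesis using Cf_deriv0 by simp
  next
    case 2 thus ?thesis by (rule Cf_deriv_pos)
  next
    case 3
    have "((\<lambda>x. Cf (- x)) has_real_derivative (- Lf (-w)) * (-1)) (at w)"
      by (rule DERIV_chain2[OF Cf_deriv_pos]) (use 3 in \<open>auto intro!: derivative_eq_intros\<close>)
    thus ?thesis by (simp add: Cf_neg Lf_neg)
  qed
qed

lemma Hf_bound: "\<bar>Hf w\<bar> \<le> r * \<bar>w\<bar> * LB \<bar>w\<bar>"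
proof (cases "w = 0")
  case True thus ?thesis by (simp add: Hf_def)
next
  case False
  have e: "\<bar>w\<bar> powr q = \<bar>w\<bar> * \<bar>w\<bar> powr (q-1)" using False powr_m1[of "\<bar>w\<bar>" q] by simp
  have "\<bar>Hf w\<bar> = r * \<bar>w\<bar> * \<bar>\<bar>w\<bar> powr (q-1) * ln \<bar>w\<bar>\<bar>"
    using False rpos unfolding Hf_def by (simp add: e abs_mult)
  also have "\<bar>\<bar>w\<bar> powr (q-1) * ln \<bar>w\<bar>\<bar> \<le> 2/(q-1) + \<bar>w\<bar> powr (q-1+1)"
    using False q1 by (intro x_ln_bound2) auto
  finally show ?thesis using rpos unfolding LB_def by (simp add: mult_left_mono)
qed

end

lemma sumcmp:
  fixes f M :: "'i \<Rightarrow> real"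
  assumes "M summable_on A" "\<And>x. x \<in> A \<Longrightarrow> \<bar>f x\<bar> \<le> M x"
  shows "f summable_on A"
proof -
  have "(\<lambda>x. norm (f x)) summable_on A"
    by (rule Infinite_Sum.abs_summable_on_comparison_test'[OF assms(1)]) (use assms in auto)
  thus ?thesis using summable_on_iff_abs_summable_on_real by blast
qed

lemma term_le_infsum:
  fixes f :: "'i \<Rightarrow> real"
  assumes "f summable_on UNIV" "\<And>x. 0 \<le> f x"
  shows "f n \<le> infsum f UNIV"
proof -
  have "infsum f {n} \<le> infsum f UNIV"
    by (rule infsum_mono2) (use assms in auto)
  thus ?thesis by simp
qed

lemma pw_abs: "even (P::nat) \<Longrightarrow> (x::real) ^ P = \<bar>x\<bar> ^ P"
  by (simp add: power_even_abs)

lemma pw_nonneg: "even (P::nat) \<Longrightarrow> 0 \<le> (x::real) ^ P"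
  by (simp add: zero_le_even_power)

lemma pw_mono: "even (P::nat) \<Longrightarrow> \<bar>x::real\<bar> \<le> \<bar>y\<bar> \<Longrightarrow> x ^ P \<le> y ^ P"
proof -
  assume e: "even P" and h: "\<bar>x\<bar> \<le> \<bar>y\<bar>"
  have "\<bar>x\<bar> ^ P \<le> \<bar>y\<bar> ^ P" using h by (intro power_mono) auto
  thus ?thesis using e by (simp add: power_even_abs)
qed

lemma cmp_pw: "even (P::nat) \<Longrightarrow> 0 < (k::real) \<Longrightarrow> \<bar>x::real\<bar> \<le> \<bar>y\<bar> \<Longrightarrow> \<bar>k * x ^ P\<bar> \<le> k * y ^ P"
proof -
  assume e: "even P" and k: "0 < k" and h: "\<bar>x\<bar> \<le> \<bar>y\<bar>"
  have "\<bar>k * x ^ P\<bar> = k * x ^ P" using e k by (simp add: abs_mult pw_nonneg)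
  also have "\<dots> \<le> k * y ^ P" using pw_mono[OF e h] k by simp
  finally show ?thesis .
qed

lemma max_pw: "(max \<bar>x::real\<bar> \<bar>y\<bar>) ^ P \<le> \<bar>x\<bar> ^ P + \<bar>y\<bar> ^ P"
  by (simp add: max_def)

lemma pw_mix:
  assumes "even (P::nat)" "1 \<le> P"
  shows "\<bar>(x::real) ^ (P-1) * y\<bar> \<le> x ^ P + y ^ P"
proof -
  let ?m = "max \<bar>x\<bar> \<bar>y\<bar>"
  have "\<bar>x ^ (P-1) * y\<bar> = \<bar>x\<bar> ^ (P-1) * \<bar>y\<bar>" by (simp add: abs_mult power_abs)
  also have "\<dots> \<le> ?m ^ (P-1) * ?m"
    by (intro mult_mono power_mono) auto
  also have "\<dots> = ?m ^ P" using assms by (simp add: power_eq_if[of _ P])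
  also have "\<dots> \<le> \<bar>x\<bar> ^ P + \<bar>y\<bar> ^ P" by (rule max_pw)
  finally show ?thesis using assms by (simp add: power_even_abs)
qed

lemma pw_sum2:
  assumes "even (P::nat)"
  shows "((x::real) + y) ^ P \<le> 2 ^ P * (x ^ P + y ^ P)"
proof -
  let ?m = "max \<bar>x\<bar> \<bar>y\<bar>"
  have "(x + y) ^ P = \<bar>x + y\<bar> ^ P" using assms by (simp add: power_even_abs)
  also have "\<dots> \<le> (2 * ?m) ^ P" by (intro power_mono) auto
  also have "\<dots> = 2 ^ P * ?m ^ P" by (simp add: power_mult_distrib)
  also have "\<dots> \<le> 2 ^ P * (\<bar>x\<bar> ^ P + \<bar>y\<bar> ^ P)" by (intro mult_left_mono max_pw) auto
  finally show ?thesis using assms by (simp add: power_even_abs)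
qed

lemma pw_sum3:
  assumes "0 \<le> x" "0 \<le> y" "0 \<le> z"
  shows "((x::real) + y + z) ^ P \<le> 3 ^ P * (x ^ P + y ^ P + z ^ P)"
proof -
  let ?m = "max x (max y z)"
  have "(x + y + z) ^ P \<le> (3 * ?m) ^ P" using assms by (intro power_mono) auto
  also have "\<dots> = 3 ^ P * ?m ^ P" by (simp add: power_mult_distrib)
  also have "?m ^ P \<le> x ^ P + y ^ P + z ^ P" using assms by (simp add: max_def)
  finally show ?thesis by (simp add: mult_left_mono)
qed

lemma fdiff_lin: "fdiff (\<lambda>n. s * u n + t * v n) n = s * fdiff u n + t * fdiff v n"
  by (simp add: fdiff_def algebra_simps)

lemma fdiff_posp: "\<bar>fdiff (posp u) n\<bar> \<le> \<bar>fdiff u n\<bar>"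
  by (simp add: fdiff_def posp_def max_def)

lemma fdiff_negp: "\<bar>fdiff (negp u) n\<bar> \<le> \<bar>fdiff u n\<bar>"
  by (simp add: fdiff_def negp_def min_def)

context LS begin

lemma powr_P: "\<bar>x\<bar> powr p = x ^ P"
proof (cases "x = 0")
  case True thus ?thesis using P2 pP by simp
next
  case False
  thus ?thesis using pP evP by (simp add: powr_realpow power_even_abs)
qed

lemma powr_P2: "\<bar>x\<bar> powr (p-2) * x = x ^ (P-1)"
proof (cases "x = 0")
  case True thus ?thesis using P2 pP by simp
next
  case False
  have "\<bar>x\<bar> powr (p-2) = \<bar>x\<bar> ^ (P-2)"
    using False pP P2 by (simp add: powr_realpow[symmetric] of_nat_diff)
  also have "\<dots> = x ^ (P-2)" using evP P2 by (simp add: power_even_abs)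
  finally have "\<bar>x\<bar> powr (p-2) * x = x ^ (P-2) * x" by simp
  also have "\<dots> = x ^ (P-1)" using P2
    by (metis One_nat_def Suc_diff_Suc Suc_le_lessD numeral_2_eq_2 power_Suc2)
  finally show ?thesis .
qed

definition Eok :: "(int \<Rightarrow> real) \<Rightarrow> bool" where
  "Eok w \<longleftrightarrow> (\<lambda>n. a n * (fdiff w n) ^ P) summable_on UNIV \<and> (\<lambda>n. b n * (w n) ^ P) summable_on UNIV"

lemma Eterm_eq: "Eterm p a b w n = a n * (fdiff w n) ^ P + b n * (w n) ^ P"
  by (simp add: Eterm_def powr_P)

lemma Eterm_nonneg: "0 \<le> Eterm p a b w n"
  unfolding Eterm_eq using apos[of n] bpos[of n] evP
  by (intro add_nonneg_nonneg mult_nonneg_nonneg) (auto simp: less_imp_le pw_nonneg)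

lemma Espace_iff: "w \<in> Espace p a b \<longleftrightarrow> Eok w"
proof
  assume "w \<in> Espace p a b"
  moreover have "Eterm p a b w = (\<lambda>n. a n * (fdiff w n) ^ P + b n * (w n) ^ P)"
    by (rule ext) (simp add: Eterm_eq)
  ultimately have s: "(\<lambda>n. a n * (fdiff w n) ^ P + b n * (w n) ^ P) summable_on UNIV"
    by (simp add: Espace_def)
  have nn1: "0 \<le> a n * (fdiff w n) ^ P" for n using apos[of n] evP by (simp add: pw_nonneg less_imp_le)
  have nn2: "0 \<le> b n * (w n) ^ P" for n using bpos[of n] evP by (simp add: pw_nonneg less_imp_le)
  show "Eok w" unfolding Eok_def
    by (intro conjI sumcmp[OF s]) (use nn1 nn2 in auto)
next
  assume "Eok w"
  moreover have "Eterm p a b w = (\<lambda>n. a n * (fdiff w n) ^ P + b n * (w n) ^ P)"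
    by (rule ext) (simp add: Eterm_eq)
  ultimately show "w \<in> Espace p a b" unfolding Espace_def Eok_def
    by (auto intro: summable_on_add)
qed

lemma Eok_lin:
  assumes "Eok u" "Eok v"
  shows "Eok (\<lambda>n. s * u n + t * v n)"
proof -
  have "(\<lambda>n. 2 ^ P * (s ^ P * (a n * (fdiff u n) ^ P) + t ^ P * (a n * (fdiff v n) ^ P))) summable_on UNIV"
    using assms unfolding Eok_def
    by (intro summable_on_cmult_right summable_on_add) auto
  moreover have "(\<lambda>n. 2 ^ P * (s ^ P * (b n * (u n) ^ P) + t ^ P * (b n * (v n) ^ P))) summable_on UNIV"
    using assms unfolding Eok_def
    by (intro summable_on_cmult_right summable_on_add) auto
  moreover have "\<bar>a n * (fdiff (\<lambda>n. s * u n + t * v n) n) ^ P\<bar> \<le> 2 ^ P * (s ^ P * (a n * (fdiff u n) ^ P) + t ^ P * (a n * (fdiff v n) ^ P))" for n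
  proof -
    have "a n * (fdiff (\<lambda>n. s * u n + t * v n) n) ^ P = a n * (s * fdiff u n + t * fdiff v n) ^ P"
      by (simp add: fdiff_lin)
    also have "\<dots> \<le> a n * (2 ^ P * ((s * fdiff u n) ^ P + (t * fdiff v n) ^ P))"
      using apos[of n] pw_sum2[OF evP] by (intro mult_left_mono) auto
    finally show ?thesis using apos[of n] evP
      by (simp add: pw_nonneg power_mult_distrib algebra_simps)
  qed
  moreover have "\<bar>b n * (s * u n + t * v n) ^ P\<bar> \<le> 2 ^ P * (s ^ P * (b n * (u n) ^ P) + t ^ P * (b n * (v n) ^ P))" for n
  proof -
    have "b n * (s * u n + t * v n) ^ P \<le> b n * (2 ^ P * ((s * u n) ^ P + (t * v n) ^ P))"
      using bpos[of n] pw_sum2[OF evP] by (intro mult_left_mono) auto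
    thus ?thesis using bpos[of n] evP
      by (simp add: pw_nonneg power_mult_distrib algebra_simps)
  qed
  ultimately show ?thesis unfolding Eok_def
    by (intro conjI) (rule sumcmp; assumption?; blast)+
qed

lemma Eok_posp: "Eok u \<Longrightarrow> Eok (posp u)"
  unfolding Eok_def
proof (elim conjE, intro conjI)
  assume A: "(\<lambda>n. a n * (fdiff u n) ^ P) summable_on UNIV" and B: "(\<lambda>n. b n * (u n) ^ P) summable_on UNIV"
  show "(\<lambda>n. a n * (fdiff (posp u) n) ^ P) summable_on UNIV"
    by (rule sumcmp[OF A], rule cmp_pw[OF evP apos fdiff_posp])
  show "(\<lambda>n. b n * (posp u n) ^ P) summable_on UNIV"
    by (rule sumcmp[OF B], rule cmp_pw[OF evP bpos]) (auto simp: posp_def)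
qed

lemma Eok_negp: "Eok u \<Longrightarrow> Eok (negp u)"
  unfolding Eok_def
proof (elim conjE, intro conjI)
  assume A: "(\<lambda>n. a n * (fdiff u n) ^ P) summable_on UNIV" and B: "(\<lambda>n. b n * (u n) ^ P) summable_on UNIV"
  show "(\<lambda>n. a n * (fdiff (negp u) n) ^ P) summable_on UNIV"
    by (rule sumcmp[OF A], rule cmp_pw[OF evP apos fdiff_negp])
  show "(\<lambda>n. b n * (negp u n) ^ P) summable_on UNIV"
    by (rule sumcmp[OF B], rule cmp_pw[OF evP bpos]) (auto simp: negp_def)
qed

lemma Eok_bdd:
  assumes "Eok w" shows "\<exists>B>0. \<forall>n. \<bar>w n\<bar> \<le> B"
proof -
  let ?S = "infsum (\<lambda>n. b n * (w n) ^ P) UNIV"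
  have s: "(\<lambda>n. b n * (w n) ^ P) summable_on UNIV" using assms by (simp add: Eok_def)
  have "\<bar>w n\<bar> \<le> max 1 (?S / b0)" for n
  proof (cases "\<bar>w n\<bar> \<le> 1")
    case True thus ?thesis by simp
  next
    case False
    have "\<bar>w n\<bar> \<le> \<bar>w n\<bar> ^ P" using False P2
      by (metis dual_order.trans le_add2 le_add_diff_inverse less_eq_real_def linorder_not_le
          one_le_numeral power_increasing power_one_right)
    also have "\<dots> = (w n) ^ P" using evP by (simp add: power_even_abs)
    also have "\<dots> \<le> ?S / b0"
    proof -
      have "b0 * (w n) ^ P \<le> b n * (w n) ^ P"
        using b0le[of n] evP by (intro mult_right_mono) (auto simp: pw_nonneg)
      also have "\<dots> \<le> ?S"
        by (rule term_le_infsum[OF s]) (use bpos evP in \<open>auto simp: pw_nonneg less_imp_le\<close>)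
      finally show ?thesis using b0pos by (simp add: field_simps)
    qed
    finally show ?thesis by simp
  qed
  thus ?thesis by (intro exI[of _ "max 1 (?S / b0)"]) auto
qed

end

lemma summable_on_diff':
  fixes f g :: "'i \<Rightarrow> real"
  shows "f summable_on A \<Longrightarrow> g summable_on A \<Longrightarrow> (\<lambda>x. f x - g x) summable_on A"
  using summable_on_add[of f A "\<lambda>x. - g x"] summable_on_uminus[of g A] by simp

lemma infsum_diff':
  fixes f g :: "'i \<Rightarrow> real"
  shows "f summable_on A \<Longrightarrow> g summable_on A \<Longrightarrow> infsum (\<lambda>x. f x - g x) A = infsum f A - infsum g A"
  using infsum_add[of f A "\<lambda>x. - g x"] summable_on_uminus[of g A] infsum_uminus[of g A] by simp

context LS begin

definition Gt :: "(int \<Rightarrow> real) \<Rightarrow> int \<Rightarrow> real" where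
  "Gt w n = (1/p) * (a n * (fdiff w n) ^ P + b n * (w n) ^ P) + c n * Cf (w n)"

definition Dt :: "(int \<Rightarrow> real) \<Rightarrow> (int \<Rightarrow> real) \<Rightarrow> int \<Rightarrow> real" where
  "Dt w z n = a n * (fdiff w n) ^ (P-1) * fdiff z n + b n * (w n) ^ (P-1) * z n - c n * Lf (w n) * z n"

lemma Cf_bound2: "\<bar>w\<bar> \<le> B \<Longrightarrow> \<bar>Cf w\<bar> \<le> r/q\<^sup>2 * B powr q + r * B * LB B / q"
proof -
  assume h: "\<bar>w\<bar> \<le> B"
  have "\<bar>Cf w\<bar> \<le> r/q\<^sup>2 * \<bar>w\<bar> powr q + \<bar>Hf w\<bar> / q"
    unfolding Cf_def using rpos qpos abs_triangle_ineq4[of "r / q\<^sup>2 * \<bar>w\<bar> powr q" "Hf w / q"]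
    by (simp add: abs_divide abs_mult)
  also have "\<bar>w\<bar> powr q \<le> B powr q" using h qpos by (intro powr_mono2) auto
  also have "\<bar>Hf w\<bar> \<le> r * \<bar>w\<bar> * LB \<bar>w\<bar>" by (rule Hf_bound)
  also have "r * \<bar>w\<bar> * LB \<bar>w\<bar> \<le> r * B * LB B"
    using h rpos LB_mono[of "\<bar>w\<bar>" B] LB_pos[of "\<bar>w\<bar>"]
    by (intro mult_mono mult_left_mono) auto
  finally show ?thesis using rpos qpos by (simp add: divide_right_mono)
qed

lemma Hf_bound2: "\<bar>w\<bar> \<le> B \<Longrightarrow> \<bar>Hf w\<bar> \<le> r * B * LB B"
proof -
  assume h: "\<bar>w\<bar> \<le> B"
  have "\<bar>Hf w\<bar> \<le> r * \<bar>w\<bar> * LB \<bar>w\<bar>" by (rule Hf_bound)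
  also have "r * \<bar>w\<bar> * LB \<bar>w\<bar> \<le> r * B * LB B"
    using h rpos LB_mono[of "\<bar>w\<bar>" B] LB_pos[of "\<bar>w\<bar>"]
    by (intro mult_mono mult_left_mono) auto
  finally show ?thesis .
qed

lemma Lf_bound2: "\<bar>w\<bar> \<le> B \<Longrightarrow> \<bar>Lf w\<bar> \<le> r * LB B"
  using Lf_bound[of w] LB_mono[of "\<bar>w\<bar>" B] rpos
  by (meson abs_ge_zero mult_left_mono less_imp_le order_trans)

lemma csum_mult: "(\<lambda>n. c n * K) summable_on UNIV"
  using csum by (rule summable_on_cmult_left)

lemma Gt_summable: "Eok w \<Longrightarrow> Gt w summable_on UNIV"
proof -
  assume E: "Eok w"
  then obtain B where B: "B > 0" "\<And>n. \<bar>w n\<bar> \<le> B" using Eok_bdd by blast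
  have s1: "(\<lambda>n. (1/p) * (a n * (fdiff w n) ^ P + b n * (w n) ^ P)) summable_on UNIV"
    using E unfolding Eok_def by (intro summable_on_cmult_right summable_on_add) auto
  have s2: "(\<lambda>n. c n * Cf (w n)) summable_on UNIV"
  proof (rule sumcmp[OF csum_mult[of "r/q\<^sup>2 * B powr q + r * B * LB B / q"]])
    fix n
    show "\<bar>c n * Cf (w n)\<bar> \<le> c n * (r/q\<^sup>2 * B powr q + r * B * LB B / q)"
      using Cf_bound2[OF B(2)[of n]] cpos[of n] by (simp add: abs_mult)
  qed
  show ?thesis unfolding Gt_def[abs_def] using summable_on_add[OF s1 s2] by simp
qed

lemma Dt_summable: "Eok w \<Longrightarrow> Eok z \<Longrightarrow> Dt w z summable_on UNIV"
proof -
  assume E: "Eok w" and Z: "Eok z"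
  obtain B where B: "B > 0" "\<And>n. \<bar>w n\<bar> \<le> B" using Eok_bdd[OF E] by blast
  obtain B' where B': "B' > 0" "\<And>n. \<bar>z n\<bar> \<le> B'" using Eok_bdd[OF Z] by blast
  have s1: "(\<lambda>n. a n * (fdiff w n) ^ (P-1) * fdiff z n) summable_on UNIV"
  proof (rule sumcmp)
    show "(\<lambda>n. a n * (fdiff w n) ^ P + a n * (fdiff z n) ^ P) summable_on UNIV"
      using E Z unfolding Eok_def by (intro summable_on_add) auto
    fix n
    have "\<bar>(fdiff w n) ^ (P-1) * fdiff z n\<bar> \<le> (fdiff w n) ^ P + (fdiff z n) ^ P"
      using evP P2 by (intro pw_mix) auto
    hence "a n * \<bar>(fdiff w n) ^ (P-1) * fdiff z n\<bar> \<le> a n * ((fdiff w n) ^ P + (fdiff z n) ^ P)"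
      using apos[of n] by (intro mult_left_mono) auto
    thus "\<bar>a n * (fdiff w n) ^ (P-1) * fdiff z n\<bar> \<le> a n * (fdiff w n) ^ P + a n * (fdiff z n) ^ P"
      using apos[of n] by (simp add: abs_mult algebra_simps)
  qed
  have s2: "(\<lambda>n. b n * (w n) ^ (P-1) * z n) summable_on UNIV"
  proof (rule sumcmp)
    show "(\<lambda>n. b n * (w n) ^ P + b n * (z n) ^ P) summable_on UNIV"
      using E Z unfolding Eok_def by (intro summable_on_add) auto
    fix n
    have "\<bar>(w n) ^ (P-1) * z n\<bar> \<le> (w n) ^ P + (z n) ^ P"
      using evP P2 by (intro pw_mix) auto
    hence "b n * \<bar>(w n) ^ (P-1) * z n\<bar> \<le> b n * ((w n) ^ P + (z n) ^ P)"
      using bpos[of n] by (intro mult_left_mono) auto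
    thus "\<bar>b n * (w n) ^ (P-1) * z n\<bar> \<le> b n * (w n) ^ P + b n * (z n) ^ P"
      using bpos[of n] by (simp add: abs_mult algebra_simps)
  qed
  have s3: "(\<lambda>n. c n * Lf (w n) * z n) summable_on UNIV"
  proof (rule sumcmp[OF csum_mult[of "r * LB B * B'"]])
    fix n
    have "\<bar>Lf (w n)\<bar> * \<bar>z n\<bar> \<le> r * LB B * B'"
      using Lf_bound2[OF B(2)[of n]] B'(2)[of n] by (intro mult_mono) auto
    thus "\<bar>c n * Lf (w n) * z n\<bar> \<le> c n * (r * LB B * B')"
      using cpos[of n] by (simp add: abs_mult mult_left_mono mult.assoc)
  qed
  show ?thesis unfolding Dt_def[abs_def]
    by (intro summable_on_diff' summable_on_add s1 s2 s3)
qed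

lemma logterm_eq: "logterm q r c w n = c n * Hf (w n)"
  by (simp add: logterm_def Hf_def)

lemma Ifun_eq: "Eok w \<Longrightarrow> Ifun p q r a b c w = infsum (Gt w) UNIV"
proof -
  assume E: "Eok w"
  then obtain B where B: "B > 0" "\<And>n. \<bar>w n\<bar> \<le> B" using Eok_bdd by blast
  have Ee: "Eterm p a b w = (\<lambda>n. a n * (fdiff w n) ^ P + b n * (w n) ^ P)"
    by (rule ext) (simp add: Eterm_eq)
  have sE: "(\<lambda>n. a n * (fdiff w n) ^ P + b n * (w n) ^ P) summable_on UNIV"
    using E unfolding Eok_def by (intro summable_on_add) auto
  have S0: "0 \<le> infsum (Eterm p a b w) UNIV"
    by (intro infsum_nonneg Eterm_nonneg)
  have En: "Enorm p a b w powr p = infsum (\<lambda>n. a n * (fdiff w n) ^ P + b n * (w n) ^ P) UNIV"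
    using S0 ppos unfolding Enorm_def Ee by (simp add: powr_powr powr_one)
  have sq: "(\<lambda>n. c n * \<bar>w n\<bar> powr q) summable_on UNIV"
  proof (rule sumcmp[OF csum_mult[of "B powr q"]])
    fix n show "\<bar>c n * \<bar>w n\<bar> powr q\<bar> \<le> c n * B powr q"
      using cpos[of n] B(2)[of n] qpos by (simp add: abs_mult powr_mono2 less_imp_le)
  qed
  have sH: "(\<lambda>n. c n * Hf (w n)) summable_on UNIV"
  proof (rule sumcmp[OF csum_mult[of "r * B * LB B"]])
    fix n show "\<bar>c n * Hf (w n)\<bar> \<le> c n * (r * B * LB B)"
      using cpos[of n] Hf_bound2[OF B(2)[of n]] by (simp add: abs_mult mult_left_mono)
  qed
  have G: "Gt w = (\<lambda>n. ((1/p) * (a n * (fdiff w n) ^ P + b n * (w n) ^ P)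
            + r / q\<^sup>2 * (c n * \<bar>w n\<bar> powr q)) - (1/q) * (c n * Hf (w n)))"
    by (rule ext) (simp add: Gt_def Cf_def algebra_simps)
  have "infsum (Gt w) UNIV = (1/p) * infsum (\<lambda>n. a n * (fdiff w n) ^ P + b n * (w n) ^ P) UNIV
      + r / q\<^sup>2 * infsum (\<lambda>n. c n * \<bar>w n\<bar> powr q) UNIV - (1/q) * infsum (\<lambda>n. c n * Hf (w n)) UNIV"
    unfolding G
    by (subst infsum_diff', (intro summable_on_add summable_on_cmult_right sE sq sH)+,
        subst infsum_add, (intro summable_on_cmult_right sE sq)+) (simp only: infsum_cmult_right')
  also have "\<dots> = Ifun p q r a b c w"
  proof -
    have "logterm q r c w = (\<lambda>n. c n * Hf (w n))" by (rule ext) (simp add: logterm_eq)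
    thus ?thesis unfolding Ifun_def En by simp
  qed
  finally show ?thesis by simp
qed

lemma dIfun_eq: "Eok w \<Longrightarrow> Eok z \<Longrightarrow> dIfun p q r a b c w z = infsum (Dt w z) UNIV"
proof -
  assume E: "Eok w" and Z: "Eok z"
  obtain B where B: "B > 0" "\<And>n. \<bar>w n\<bar> \<le> B" using Eok_bdd[OF E] by blast
  obtain B' where B': "B' > 0" "\<And>n. \<bar>z n\<bar> \<le> B'" using Eok_bdd[OF Z] by blast
  have s12: "(\<lambda>n. a n * (fdiff w n) ^ (P-1) * fdiff z n + b n * (w n) ^ (P-1) * z n) summable_on UNIV"
  proof -
    have "(\<lambda>n. Dt w z n + c n * Lf (w n) * z n) summable_on UNIV"
    proof (intro summable_on_add Dt_summable E Z)
      show "(\<lambda>n. c n * Lf (w n) * z n) summable_on UNIV"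
      proof (rule sumcmp[OF csum_mult[of "r * LB B * B'"]])
        fix n
        have "\<bar>Lf (w n)\<bar> * \<bar>z n\<bar> \<le> r * LB B * B'"
          using Lf_bound2[OF B(2)[of n]] B'(2)[of n] by (intro mult_mono) auto
        thus "\<bar>c n * Lf (w n) * z n\<bar> \<le> c n * (r * LB B * B')"
          using cpos[of n] by (simp add: abs_mult mult_left_mono mult.assoc)
      qed
    qed
    thus ?thesis by (simp add: Dt_def)
  qed
  have s3: "(\<lambda>n. c n * Lf (w n) * z n) summable_on UNIV"
  proof (rule sumcmp[OF csum_mult[of "r * LB B * B'"]])
    fix n
    have "\<bar>Lf (w n)\<bar> * \<bar>z n\<bar> \<le> r * LB B * B'"
      using Lf_bound2[OF B(2)[of n]] B'(2)[of n] by (intro mult_mono) auto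
    thus "\<bar>c n * Lf (w n) * z n\<bar> \<le> c n * (r * LB B * B')"
      using cpos[of n] by (simp add: abs_mult mult_left_mono mult.assoc)
  qed
  have e1: "(\<lambda>n. a n * \<bar>fdiff w n\<bar> powr (p - 2) * fdiff w n * fdiff z n
            + b n * \<bar>w n\<bar> powr (p - 2) * w n * z n)
        = (\<lambda>n. a n * (fdiff w n) ^ (P-1) * fdiff z n + b n * (w n) ^ (P-1) * z n)"
  proof (rule ext)
    fix n
    have x: "\<And>k x y. k * \<bar>x\<bar> powr (p - 2) * x * y = k * (\<bar>x\<bar> powr (p - 2) * x) * y"
      by (simp only: mult.assoc)
    show "a n * \<bar>fdiff w n\<bar> powr (p - 2) * fdiff w n * fdiff z n
            + b n * \<bar>w n\<bar> powr (p - 2) * w n * z n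
        = a n * (fdiff w n) ^ (P-1) * fdiff z n + b n * (w n) ^ (P-1) * z n"
      unfolding x powr_P2 ..
  qed
  have e2: "(\<lambda>n. (if w n = 0 then 0 else
            c n * \<bar>w n\<bar> powr (q - 2) * w n * z n * ln (\<bar>w n\<bar> powr r)))
        = (\<lambda>n. c n * Lf (w n) * z n)"
    by (rule ext) (simp add: Lf_def)
  show ?thesis unfolding dIfun_def e1 e2 Dt_def[abs_def]
    by (rule infsum_diff'[symmetric, OF s12 s3])
qed

end

lemma GL:
  fixes f :: "int \<Rightarrow> 'a::metric_space \<Rightarrow> real" and M :: "int \<Rightarrow> real"
  assumes M: "M summable_on UNIV" and bd: "\<And>n x. x \<in> K \<Longrightarrow> \<bar>f n x\<bar> \<le> M n"
    and ct: "\<And>n. continuous_on K (f n)" and x0: "x0 \<in> K" and e: "0 < e"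
  shows "\<exists>d>0. \<forall>g::int\<Rightarrow>_. (\<forall>n. g n \<in> K \<and> dist (g n) x0 < d) \<longrightarrow>
           \<bar>infsum (\<lambda>n. f n (g n)) UNIV - infsum (\<lambda>n. f n x0) UNIV\<bar> \<le> e"
proof -
  have M0: "0 \<le> M n" for n using bd[OF x0, of n] by linarith
  obtain F where F: "finite F" "dist (sum M F) (infsum M UNIV) \<le> e/4"
    using infsum_finite_approximation[OF M, of "e/4"] e by auto
  have sMF: "M summable_on (-F)" using M summable_on_subset_banach by blast
  have "infsum M UNIV = infsum M (F \<union> -F)" by simp
  also have "\<dots> = sum M F + infsum M (-F)"
    using F(1) sMF by (subst infsum_Un_disjoint) auto
  finally have "infsum M (-F) \<le> e/4" using F(2) by (simp add: dist_real_def)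
  define e1 where "e1 = e / (2 * (real (card F) + 1))"
  have e1: "0 < e1" using e by (simp add: e1_def add_pos_nonneg)
  have "\<forall>n\<in>F. \<exists>d>0. \<forall>x\<in>K. dist x x0 < d \<longrightarrow> dist (f n x) (f n x0) < e1"
    using ct x0 e1 unfolding continuous_on_iff by blast
  then obtain dd where dd: "\<And>n. n \<in> F \<Longrightarrow> dd n > 0 \<and> (\<forall>x\<in>K. dist x x0 < dd n \<longrightarrow> dist (f n x) (f n x0) < e1)"
    by metis
  define d where "d = Min (insert 1 (dd ` F))"
  have d0: "0 < d" unfolding d_def using F(1) dd by (subst Min_gr_iff) auto
  have dle: "n \<in> F \<Longrightarrow> d \<le> dd n" for n unfolding d_def using F(1) by (intro Min_le) auto
  show ?thesis
  proof (intro exI[of _ d] conjI d0 allI impI)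
    fix g :: "int \<Rightarrow> 'a" assume g: "\<forall>n. g n \<in> K \<and> dist (g n) x0 < d"
    define h where "h n = f n (g n) - f n x0" for n :: int
    have sM2: "(\<lambda>n. 2 * M n) summable_on A" for A
      using M summable_on_subset_banach summable_on_cmult_right by blast
    have hb: "\<bar>h n\<bar> \<le> 2 * M n" for n using bd[of "g n" n] bd[OF x0, of n] g unfolding h_def by auto
    have hb1: "- (2 * M n) \<le> h n" "h n \<le> 2 * M n" for n using hb[of n] by linarith+
    have sh: "h summable_on A" for A by (rule sumcmp[OF sM2]) (use hb in auto)
    have s1: "(\<lambda>n. f n (g n)) summable_on UNIV" by (rule sumcmp[OF M]) (use bd g in auto)
    have s2: "(\<lambda>n. f n x0) summable_on UNIV" by (rule sumcmp[OF M]) (use bd x0 in auto)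
    have "infsum (\<lambda>n. f n (g n)) UNIV - infsum (\<lambda>n. f n x0) UNIV = infsum h UNIV"
      unfolding h_def by (rule infsum_diff'[symmetric, OF s1 s2])
    also have "infsum h UNIV = infsum h (F \<union> -F)" by simp
    also have "\<dots> = sum h F + infsum h (-F)"
      using F(1) sh by (subst infsum_Un_disjoint) auto
    finally have eq: "infsum (\<lambda>n. f n (g n)) UNIV - infsum (\<lambda>n. f n x0) UNIV = sum h F + infsum h (-F)" .
    have "\<bar>sum h F\<bar> \<le> sum (\<lambda>n. \<bar>h n\<bar>) F" by (rule sum_abs)
    also have "\<dots> \<le> sum (\<lambda>n. e1) F"
    proof (rule sum_mono)
      fix n assume n: "n \<in> F"
      have "dist (g n) x0 < dd n" using g dle[OF n] by (meson order_less_le_trans)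
      thus "\<bar>h n\<bar> \<le> e1" using dd[OF n] g unfolding h_def dist_real_def by force
    qed
    also have "\<dots> = real (card F) * e1" by simp
    also have "\<dots> \<le> e/2" unfolding e1_def using e by (simp add: field_simps)
    finally have A: "\<bar>sum h F\<bar> \<le> e/2" .
    have "infsum h (-F) \<le> infsum (\<lambda>n. 2 * M n) (-F)"
      by (rule infsum_mono[OF sh sM2]) (use hb1 in auto)
    moreover have "- infsum (\<lambda>n. 2 * M n) (-F) \<le> infsum h (-F)"
    proof -
      have "infsum (\<lambda>n. - (2 * M n)) (-F) \<le> infsum h (-F)"
        by (rule infsum_mono[OF summable_on_uminus[THEN iffD2, OF sM2] sh]) (use hb1 in auto)
      thus ?thesis by (simp add: infsum_uminus)
    qed
    moreover have "infsum (\<lambda>n. 2 * M n) (-F) \<le> e/2"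
      using \<open>infsum M (-F) \<le> e/4\<close> by (simp add: infsum_cmult_right')
    ultimately have B: "\<bar>infsum h (-F)\<bar> \<le> e/2" by linarith
    show "\<bar>infsum (\<lambda>n. f n (g n)) UNIV - infsum (\<lambda>n. f n x0) UNIV\<bar> \<le> e"
      unfolding eq using A B by linarith
  qed
qed

lemma cont_sum:
  fixes f :: "int \<Rightarrow> 'a::metric_space \<Rightarrow> real" and M :: "int \<Rightarrow> real"
  assumes M: "M summable_on UNIV" and bd: "\<And>n x. x \<in> K \<Longrightarrow> \<bar>f n x\<bar> \<le> M n"
    and ct: "\<And>n. continuous_on K (f n)"
  shows "continuous_on K (\<lambda>x. infsum (\<lambda>n. f n x) UNIV)"
  unfolding continuous_on_iff
proof (intro ballI allI impI)
  fix x0 and e :: real assume x0: "x0 \<in> K" and e: "0 < e"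
  obtain d where d: "d > 0" "\<forall>g::int\<Rightarrow>_. (\<forall>n. g n \<in> K \<and> dist (g n) x0 < d) \<longrightarrow>
           \<bar>infsum (\<lambda>n. f n (g n)) UNIV - infsum (\<lambda>n. f n x0) UNIV\<bar> \<le> e/2"
    using GL[OF M bd ct x0, of "e/2"] e by auto
  show "\<exists>d>0. \<forall>x'\<in>K. dist x' x0 < d \<longrightarrow> dist (infsum (\<lambda>n. f n x') UNIV) (infsum (\<lambda>n. f n x0) UNIV) < e"
  proof (intro exI[of _ d] conjI d(1) ballI impI)
    fix x' assume "x' \<in> K" "dist x' x0 < d"
    hence "\<bar>infsum (\<lambda>n. f n x') UNIV - infsum (\<lambda>n. f n x0) UNIV\<bar> \<le> e/2"
      using d(2)[rule_format, of "\<lambda>n. x'"] by auto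
    thus "dist (infsum (\<lambda>n. f n x') UNIV) (infsum (\<lambda>n. f n x0) UNIV) < e"
      using e by (simp add: dist_real_def)
  qed
qed

lemma miranda:
  fixes F :: "real \<times> real \<Rightarrow> real \<times> real" and d R :: real
  assumes dR: "d < R" and ct: "continuous_on ({d..R} \<times> {d..R}) F"
    and s1: "\<And>t. d \<le> t \<Longrightarrow> t \<le> R \<Longrightarrow> fst (F (d,t)) > 0"
    and s2: "\<And>t. d \<le> t \<Longrightarrow> t \<le> R \<Longrightarrow> fst (F (R,t)) < 0"
    and s3: "\<And>s. d \<le> s \<Longrightarrow> s \<le> R \<Longrightarrow> snd (F (s,d)) > 0"
    and s4: "\<And>s. d \<le> s \<Longrightarrow> s \<le> R \<Longrightarrow> snd (F (s,R)) < 0"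
  shows "\<exists>s t. d \<le> s \<and> s \<le> R \<and> d \<le> t \<and> t \<le> R \<and> F (s,t) = (0,0)"
proof -
  let ?S = "{d..R} \<times> {d..R}"
  define G where "G x = (max d (min R (fst x + fst (F x))), max d (min R (snd x + snd (F x))))" for x
  have "continuous_on ?S G" unfolding G_def
    by (intro continuous_intros ct)
  moreover have "G \<in> ?S \<rightarrow> ?S" using dR unfolding G_def by auto
  moreover have "compact ?S" by (intro compact_Times compact_Icc)
  moreover have "convex ?S" by (intro convex_Times convex_real_interval)
  moreover have "?S \<noteq> {}" using dR by auto
  ultimately obtain x where x: "x \<in> ?S" "G x = x" using brouwer by metis
  obtain s t where st: "x = (s,t)" by fastforce
  have sI: "d \<le> s" "s \<le> R" "d \<le> t" "t \<le> R" using x(1) st by auto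
  have g1: "max d (min R (s + fst (F (s,t)))) = s" and g2: "max d (min R (t + snd (F (s,t)))) = t"
    using x(2) st unfolding G_def by auto
  have f1: "fst (F (s,t)) = 0"
  proof (cases "s = d")
    case True thus ?thesis using s1[of t] sI g1 dR by (auto simp: max_def min_def split: if_splits)
  next
    case False note sd = this
    show ?thesis
    proof (cases "s = R")
      case True thus ?thesis using s2[of t] sI g1 dR by (auto simp: max_def min_def split: if_splits)
    next
      case False thus ?thesis using sd sI g1 dR by (auto simp: max_def min_def split: if_splits)
    qed
  qed
  have f2: "snd (F (s,t)) = 0"
  proof (cases "t = d")
    case True thus ?thesis using s3[of s] sI g2 dR by (auto simp: max_def min_def split: if_splits)
  next
    case False note sd = this
    show ?thesis
    proof (cases "t = R")
      case True thus ?thesis using s4[of s] sI g2 dR by (auto simp: max_def min_def split: if_splits)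
    next
      case False thus ?thesis using sd sI g2 dR by (auto simp: max_def min_def split: if_splits)
    qed
  qed
  show ?thesis using sI f1 f2 by (intro exI[of _ s] exI[of _ t]) (auto simp: prod_eq_iff)
qed

lemma ln_strict: "0 < (z::real) \<Longrightarrow> z \<noteq> 1 \<Longrightarrow> ln z < z - 1"
proof -
  assume z: "0 < z" "z \<noteq> 1"
  have sz: "0 < sqrt z" "sqrt z \<noteq> 1" using z by auto
  have "ln z = 2 * ln (sqrt z)" using z by (simp add: ln_sqrt)
  also have "\<dots> \<le> 2 * (sqrt z - 1)" using ln_le_minus_one[OF sz(1)] by simp
  also have "\<dots> < z - 1"
  proof -
    have "0 < (sqrt z - 1)^2" using sz by simp
    hence "0 < (sqrt z)^2 - 2 * sqrt z + 1" by (simp add: power2_eq_square algebra_simps)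
    thus ?thesis using z by simp
  qed
  finally show ?thesis .
qed

lemma yln_nonneg: "0 < (y::real) \<Longrightarrow> 0 \<le> 1 - y + y * ln y"
proof -
  assume y: "0 < y"
  have "ln (1/y) \<le> 1/y - 1" using y by (intro ln_le_minus_one) auto
  hence "- ln y \<le> 1/y - 1" using y by (simp add: ln_div)
  hence "y * (- ln y) \<le> y * (1/y - 1)" using y by (intro mult_left_mono) auto
  thus ?thesis using y by (simp add: algebra_simps)
qed

lemma yln_pos: "0 < (y::real) \<Longrightarrow> y \<noteq> 1 \<Longrightarrow> 0 < 1 - y + y * ln y"
proof -
  assume y: "0 < y" "y \<noteq> 1"
  have "ln (1/y) < 1/y - 1" using y by (intro ln_strict) auto
  hence "- ln y < 1/y - 1" using y by (simp add: ln_div)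
  hence "y * (- ln y) < y * (1/y - 1)" using y by (intro mult_strict_left_mono) auto
  thus ?thesis using y by (simp add: algebra_simps)
qed

lemma posp_negp_fdiff: "0 \<le> fdiff (posp u) n * fdiff (negp u) n"
  by (auto simp: fdiff_def posp_def negp_def max_def min_def mult_le_0_iff
      intro: mult_nonpos_nonpos mult_nonneg_nonneg)

lemma posp_negp_val: "posp u n * negp u n = 0"
  by (simp add: posp_def negp_def max_def min_def)

lemma posp_negp_sum: "posp u n + negp u n = u n"
  by (simp add: posp_def negp_def max_def min_def)

lemma fdiff_posp_negp: "fdiff (posp u) n + fdiff (negp u) n = fdiff u n"
  unfolding fdiff_def using posp_negp_sum[of u n] posp_negp_sum[of u "n+1"] by linarith

context LS begin

lemma P1: "odd (P - 1)"
proof -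
  obtain m where "P = Suc m" using P2 by (cases P) auto
  thus ?thesis using evP by simp
qed

lemma a_ineq_pos:
  assumes X: "0 \<le> X" and Y: "0 \<le> Y" and s: "0 < s" and t: "0 < t"
  shows "(p/q) * (X+Y)^(P-1) * ((1 - s powr q)*X + (1 - t powr q)*Y) \<le> (X+Y)^P - (s*X+t*Y)^P"
proof (cases "X + Y = 0")
  case True
  hence "X = 0" "Y = 0" using X Y by auto
  thus ?thesis using P2 by simp
next
  case False
  define Z where "Z = X + Y"
  have Z: "0 < Z" using False X Y unfolding Z_def by simp
  define la where "la = X / Z"
  define mu where "mu = Y / Z"
  have lm: "0 \<le> la" "0 \<le> mu" "la + mu = 1" "mu \<le> 1"
    using X Y Z unfolding la_def mu_def Z_def by (auto simp: divide_simps)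
  define m where "m = la * s + mu * t"
  have mins: "0 < min s t" using s t by simp
  have m: "0 < m"
  proof -
    have "la * min s t \<le> la * s" "mu * min s t \<le> mu * t" using lm by (auto intro: mult_left_mono)
    hence "(la + mu) * min s t \<le> m" unfolding m_def by (simp add: algebra_simps)
    hence "min s t \<le> m" using lm(3) by simp
    thus ?thesis using mins by linarith
  qed
  define Q where "Q = la * s powr q + mu * t powr q"
  have Q: "0 < Q"
  proof -
    have "la * min (s powr q) (t powr q) \<le> la * s powr q" "mu * min (s powr q) (t powr q) \<le> mu * t powr q"
      using lm by (auto intro: mult_left_mono)
    hence "(la + mu) * min (s powr q) (t powr q) \<le> Q" unfolding Q_def by (simp add: algebra_simps)
    hence "min (s powr q) (t powr q) \<le> Q" using lm(3) by simp
    moreover have "0 < min (s powr q) (t powr q)" using s t by simp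
    ultimately show ?thesis by linarith
  qed
  have jen: "m powr q \<le> Q"
  proof -
    have "((1 - mu) *\<^sub>R s + mu *\<^sub>R t) powr q \<le> (1 - mu) * s powr q + mu * t powr q"
      using convex_onD[OF powr_convex[of q], of mu s t] q1 lm s t by auto
    moreover have "1 - mu = la" using lm by simp
    ultimately show ?thesis unfolding m_def Q_def by simp
  qed
  have pq0: "0 \<le> p/q" "p/q \<le> 1" using ppos qpos pq by auto
  have "m ^ P = m powr p" using m pP by (simp add: powr_realpow)
  also have "\<dots> = (m powr q) powr (p/q)" using qpos by (simp add: powr_powr)
  also have "\<dots> \<le> Q powr (p/q)" using jen pq0 by (intro powr_mono2) auto
  also have "\<dots> \<le> (p/q) * Q + (1 - p/q) * 1"
    using Youngs_inequality_0[of "p/q" "1 - p/q" Q 1] pq0 Q by simp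
  also have "(p/q) * Q + (1 - p/q) * 1 = 1 - (p/q) * (1 - Q)" by (simp add: right_diff_distrib)
  finally have mP: "m ^ P \<le> 1 - (p/q) * (1 - Q)" .
  have sXtY: "s*X + t*Y = Z * m" unfolding m_def la_def mu_def using Z by (simp add: field_simps)
  have ZQ: "Z * (1 - Q) = (1 - s powr q)*X + (1 - t powr q)*Y"
  proof -
    have "Z * Q = X * s powr q + Y * t powr q" unfolding Q_def la_def mu_def using Z by (simp add: field_simps)
    thus ?thesis unfolding Z_def by (simp add: algebra_simps)
  qed
  have ZP: "Z ^ P = Z ^ (P-1) * Z" using P2 by (cases P) auto
  have "(s*X+t*Y)^P = Z^P * m^P" unfolding sXtY by (simp add: power_mult_distrib)
  also have "\<dots> \<le> Z^P * (1 - (p/q) * (1 - Q))" using mP Z by (intro mult_left_mono) auto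
  also have "\<dots> = Z^P - (p/q) * Z^(P-1) * (Z * (1 - Q))" unfolding ZP by (simp add: algebra_simps)
  also have "\<dots> = Z^P - (p/q) * Z^(P-1) * ((1 - s powr q)*X + (1 - t powr q)*Y)" unfolding ZQ ..
  finally show ?thesis using Z_def by simp
qed

lemma a_ineq:
  assumes xy: "0 \<le> x * y" and s: "0 < s" and t: "0 < t"
  shows "(p/q) * (x+y)^(P-1) * ((1 - s powr q)*x + (1 - t powr q)*y) \<le> (x+y)^P - (s*x+t*y)^P"
proof (cases "0 \<le> x \<and> 0 \<le> y")
  case True thus ?thesis using a_ineq_pos s t by blast
next
  case False
  hence xy': "x \<le> 0" "y \<le> 0" using xy
    by (auto simp: zero_le_mult_iff)
  have h: "(p/q) * (-x + -y)^(P-1) * ((1 - s powr q)*(-x) + (1 - t powr q)*(-y)) \<le> (-x + -y)^P - (s*(-x)+t*(-y))^P"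
    using xy' s t by (intro a_ineq_pos) auto
  have e1: "(-x + -y)^(P-1) = - ((x+y)^(P-1))"
  proof -
    have "(-(x+y))^(P-1) = -((x+y)^(P-1))" using P1 by (rule power_minus_odd)
    thus ?thesis by simp
  qed
  have e2: "(-x + -y)^P = (x+y)^P"
  proof -
    have "(-(x+y))^P = (x+y)^P" using evP by (rule power_minus_even)
    thus ?thesis by simp
  qed
  have e3: "(s*(-x)+t*(-y))^P = (s*x+t*y)^P"
  proof -
    have "(-(s*x+t*y))^P = (s*x+t*y)^P" using evP by (rule power_minus_even)
    thus ?thesis by simp
  qed
  show ?thesis using h unfolding e1 e2 e3 by (simp add: algebra_simps)
qed

lemma c_ident:
  assumes w: "0 < w" and s: "0 < s"
  shows "Cf w - Cf (s*w) + ((1 - s powr q)/q) * (Lf w * w)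
         = r/q\<^sup>2 * w powr q * (1 - s powr q + s powr q * ln (s powr q))"
proof -
  have h1: "Hf w = w powr q * (r * ln w)" using w by (simp add: Hf_def)
  have h2: "Hf (s*w) = s powr q * w powr q * (r * (ln s + ln w))"
    using w s by (simp add: Hf_def powr_mult ln_mult abs_mult distrib_left)
  have h3: "Lf w * w = w powr q * (r * ln w)"
  proof -
    have "w powr (q-2) * w * w = w powr q"
      using w powr_m1[of w q] powr_m1[of w "q-1"] by simp
    thus ?thesis using w by (simp add: Lf_def algebra_simps)
  qed
  have h4: "\<bar>s*w\<bar> powr q = s powr q * w powr q" using w s by (simp add: abs_mult powr_mult)
  show ?thesis
    unfolding Cf_def h1 h2 h3 h4 using w s qpos
    by (simp add: field_simps power2_eq_square)
qed

lemma c_ineq: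
  assumes s: "0 < s" and w: "w \<noteq> 0"
  shows "0 \<le> Cf w - Cf (s*w) + ((1 - s powr q)/q) * (Lf w * w)"
    and "s \<noteq> 1 \<Longrightarrow> 0 < Cf w - Cf (s*w) + ((1 - s powr q)/q) * (Lf w * w)"
proof -
  have e: "Cf w - Cf (s*w) + ((1 - s powr q)/q) * (Lf w * w)
         = r/q\<^sup>2 * \<bar>w\<bar> powr q * (1 - s powr q + s powr q * ln (s powr q))"
  proof (cases "0 < w")
    case True thus ?thesis using c_ident[OF True s] by simp
  next
    case False
    hence w': "0 < -w" using w by simp
    have "Cf (-w) - Cf (s*(-w)) + ((1 - s powr q)/q) * (Lf (-w) * (-w))
         = r/q\<^sup>2 * (-w) powr q * (1 - s powr q + s powr q * ln (s powr q))"
      by (rule c_ident[OF w' s])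
    moreover have "Cf (s*(-w)) = Cf (s*w)" using Cf_neg[of "s*w"] by simp
    ultimately show ?thesis using False by (simp add: Cf_neg Lf_neg)
  qed
  have A: "0 < r/q\<^sup>2 * \<bar>w\<bar> powr q" using rpos qpos w by simp
  have Y: "0 \<le> 1 - s powr q + s powr q * ln (s powr q)" using yln_nonneg[of "s powr q"] s by simp
  show "0 \<le> Cf w - Cf (s*w) + ((1 - s powr q)/q) * (Lf w * w)"
    unfolding e by (rule mult_nonneg_nonneg[OF less_imp_le[OF A] Y])
  assume "s \<noteq> 1"
  hence "s powr q \<noteq> 1" using s qpos by (simp add: powr_eq_one_iff_gen)
  hence Y': "0 < 1 - s powr q + s powr q * ln (s powr q)" using yln_pos[of "s powr q"] s by simp
  show "0 < Cf w - Cf (s*w) + ((1 - s powr q)/q) * (Lf w * w)"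
    unfolding e by (rule mult_pos_pos[OF A Y'])
qed

lemma sign_odd:
  fixes x y s t :: real
  assumes "0 \<le> x * y" "0 \<le> s" "0 \<le> t"
  shows "0 \<le> (s*x + t*y)^(P-1) * x"
proof (cases "0 \<le> x \<and> 0 \<le> y")
  case True thus ?thesis using assms by (intro mult_nonneg_nonneg zero_le_power) auto
next
  case False
  hence xy': "x \<le> 0" "y \<le> 0" using assms(1)
    by (auto simp: zero_le_mult_iff)
  have "s*x + t*y \<le> 0" using xy' assms by (simp add: add_nonpos_nonpos mult_nonneg_nonpos)
  hence "0 \<le> (-(s*x + t*y))^(P-1)" by (intro zero_le_power) auto
  moreover have "(-(s*x + t*y))^(P-1) = - ((s*x + t*y)^(P-1))" using P1 by (rule power_minus_odd)
  ultimately have "(s*x + t*y)^(P-1) \<le> 0" by linarith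
  thus ?thesis using xy' by (simp add: mult_nonpos_nonpos)
qed

lemma sign_odd_le:
  fixes x y s t :: real
  assumes "0 \<le> x * y" "0 \<le> t" "t \<le> s"
  shows "(s*x + t*y)^(P-1) * x \<le> s^(P-1) * ((x+y)^(P-1) * x)"
proof -
  have pos: "(s*X + t*Y)^(P-1) * X \<le> s^(P-1) * ((X+Y)^(P-1) * X)" if "0 \<le> X" "0 \<le> Y" for X Y
  proof -
    have "t*Y \<le> s*Y" using that assms by (intro mult_right_mono) auto
    hence "(s*X + t*Y)^(P-1) \<le> (s*(X+Y))^(P-1)"
      using that assms by (intro power_mono) (auto simp: algebra_simps)
    hence "(s*X + t*Y)^(P-1) * X \<le> (s*(X+Y))^(P-1) * X" using that by (intro mult_right_mono) auto
    thus ?thesis by (simp add: power_mult_distrib)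
  qed
  show ?thesis
  proof (cases "0 \<le> x \<and> 0 \<le> y")
    case True thus ?thesis using pos by blast
  next
    case False
    hence xy': "x \<le> 0" "y \<le> 0" using assms(1)
      by (auto simp: zero_le_mult_iff)
    have h: "(s*(-x) + t*(-y))^(P-1) * (-x) \<le> s^(P-1) * ((-x + -y)^(P-1) * (-x))"
      by (rule pos) (use xy' in auto)
    have e1: "(s*(-x) + t*(-y))^(P-1) = - ((s*x+t*y)^(P-1))"
    proof -
      have "(-(s*x+t*y))^(P-1) = -((s*x+t*y)^(P-1))" using P1 by (rule power_minus_odd)
      thus ?thesis by simp
    qed
    have e2: "(-x + -y)^(P-1) = - ((x+y)^(P-1))"
    proof -
      have "(-(x+y))^(P-1) = -((x+y)^(P-1))" using P1 by (rule power_minus_odd)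
      thus ?thesis by simp
    qed
    show ?thesis using h unfolding e1 e2 by simp
  qed
qed

end

definition gam :: "(int \<Rightarrow> real) \<Rightarrow> real \<Rightarrow> real \<Rightarrow> int \<Rightarrow> real" where
  "gam u s t = (\<lambda>n. s * posp u n + t * negp u n)"

lemma fdiff_gam: "fdiff (gam u s t) n = s * fdiff (posp u) n + t * fdiff (negp u) n"
  unfolding gam_def by (rule fdiff_lin)

lemma posp_gam: "0 < s \<Longrightarrow> 0 < t \<Longrightarrow> posp (gam u s t) = (\<lambda>n. s * posp u n)"
  by (rule ext) (auto simp: gam_def posp_def negp_def max_def min_def mult_le_0_iff zero_le_mult_iff)

lemma negp_gam: "0 < s \<Longrightarrow> 0 < t \<Longrightarrow> negp (gam u s t) = (\<lambda>n. t * negp u n)"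
  by (rule ext) (auto simp: gam_def posp_def negp_def max_def min_def mult_le_0_iff zero_le_mult_iff)

lemma gam11: "gam u 1 1 = u"
  by (rule ext) (simp add: gam_def posp_negp_sum)

lemma pos_case: "0 < u n \<Longrightarrow> posp u n = u n \<and> negp u n = 0"
  by (simp add: posp_def negp_def)
lemma neg_case: "u n < 0 \<Longrightarrow> posp u n = 0 \<and> negp u n = u n"
  by (simp add: posp_def negp_def)
lemma zero_case: "u n = 0 \<Longrightarrow> posp u n = 0 \<and> negp u n = 0"
  by (simp add: posp_def negp_def)

context LS begin

lemma Eok_gam: "Eok u \<Longrightarrow> Eok (gam u s t)"
  unfolding gam_def by (intro Eok_lin Eok_posp Eok_negp)

lemma LfHf: "Lf w * w = Hf w"
proof (cases "w = 0")
  case True thus ?thesis by (simp add: Lf_def Hf_def)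
next
  case False
  have "\<bar>w\<bar> powr (q-2) * w * w = \<bar>w\<bar> powr (q-2) * \<bar>w\<bar> * \<bar>w\<bar>"
    by (simp add: mult.assoc abs_mult_self_eq)
  also have "\<dots> = \<bar>w\<bar> powr q"
    using False powr_m1[of "\<bar>w\<bar>" q] powr_m1[of "\<bar>w\<bar>" "q-1"] by simp
  finally show ?thesis using False by (simp add: Lf_def Hf_def algebra_simps)
qed

lemma Hf_scale: "0 < w \<Longrightarrow> 0 < s \<Longrightarrow> Hf (s*w) = s powr q * Hf w + s powr q * w powr q * r * ln s"
  by (simp add: Hf_def powr_mult abs_mult ln_mult algebra_simps)

lemma Hf_posp_nonneg_part: "0 < s \<Longrightarrow> s \<le> 1 \<Longrightarrow> Hf (s * posp u n) \<le> s powr q * Hf (posp u n)"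
proof (cases "0 < posp u n")
  case True
  assume s: "0 < s" "s \<le> 1"
  have "s powr q * posp u n powr q * r * ln s \<le> 0"
    using s True rpos by (simp add: mult_nonneg_nonpos)
  thus ?thesis using Hf_scale[OF True s(1)] by simp
next
  case False
  hence "posp u n = 0" by (simp add: posp_def)
  thus ?thesis by (simp add: Hf_def)
qed

lemma Hf_posp_ge: "1 \<le> s \<Longrightarrow> s powr q * Hf (posp u n) \<le> Hf (s * posp u n)"
proof (cases "0 < posp u n")
  case True
  assume s: "1 \<le> s"
  have "0 \<le> s powr q * posp u n powr q * r * ln s"
    using s True rpos by simp
  thus ?thesis using Hf_scale[OF True] s by simp
next
  case False
  hence "posp u n = 0" by (simp add: posp_def)
  thus ?thesis by (simp add: Hf_def)
qed

lemma R_eq: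
  "Gt u n - Gt (gam u s t) n - ((1 - s powr q)/q) * Dt u (posp u) n - ((1 - t powr q)/q) * Dt u (negp u) n
   = a n * ((1/p) * ((fdiff (posp u) n + fdiff (negp u) n)^P - (s * fdiff (posp u) n + t * fdiff (negp u) n)^P)
        - (1/q) * (fdiff (posp u) n + fdiff (negp u) n)^(P-1) * ((1 - s powr q) * fdiff (posp u) n + (1 - t powr q) * fdiff (negp u) n))
   + b n * ((1/p) * ((posp u n + negp u n)^P - (s * posp u n + t * negp u n)^P)
        - (1/q) * (posp u n + negp u n)^(P-1) * ((1 - s powr q) * posp u n + (1 - t powr q) * negp u n))
   + c n * (Cf (u n) - Cf (gam u s t n) + ((1 - s powr q)/q) * (Lf (u n) * posp u n) + ((1 - t powr q)/q) * (Lf (u n) * negp u n))"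
  unfolding Gt_def Dt_def fdiff_gam fdiff_posp_negp[of u n, symmetric] posp_negp_sum[of u n, symmetric]
  by (simp add: gam_def algebra_simps diff_divide_distrib add_divide_distrib)

lemma R_nonneg:
  assumes s: "0 < s" and t: "0 < t"
  shows "0 \<le> Gt u n - Gt (gam u s t) n - ((1 - s powr q)/q) * Dt u (posp u) n - ((1 - t powr q)/q) * Dt u (negp u) n"
    and "s \<noteq> 1 \<Longrightarrow> 0 < u n \<Longrightarrow> 0 < Gt u n - Gt (gam u s t) n - ((1 - s powr q)/q) * Dt u (posp u) n - ((1 - t powr q)/q) * Dt u (negp u) n"
    and "t \<noteq> 1 \<Longrightarrow> u n < 0 \<Longrightarrow> 0 < Gt u n - Gt (gam u s t) n - ((1 - s powr q)/q) * Dt u (posp u) n - ((1 - t powr q)/q) * Dt u (negp u) n"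
proof -
  have phi: "0 \<le> (1/p) * ((x + y)^P - (s * x + t * y)^P) - (1/q) * (x + y)^(P-1) * ((1 - s powr q) * x + (1 - t powr q) * y)"
    if "0 \<le> x * y" for x y
  proof -
    have "(p/q) * (x+y)^(P-1) * ((1 - s powr q)*x + (1 - t powr q)*y) \<le> (x+y)^P - (s*x+t*y)^P"
      by (rule a_ineq[OF that s t])
    hence "(1/p) * ((p/q) * (x+y)^(P-1) * ((1 - s powr q)*x + (1 - t powr q)*y)) \<le> (1/p) * ((x+y)^P - (s*x+t*y)^P)"
      using ppos by (intro mult_left_mono) auto
    thus ?thesis using ppos by simp
  qed
  define A where "A = a n * ((1/p) * ((fdiff (posp u) n + fdiff (negp u) n)^P - (s * fdiff (posp u) n + t * fdiff (negp u) n)^P)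
        - (1/q) * (fdiff (posp u) n + fdiff (negp u) n)^(P-1) * ((1 - s powr q) * fdiff (posp u) n + (1 - t powr q) * fdiff (negp u) n))"
  define B where "B = b n * ((1/p) * ((posp u n + negp u n)^P - (s * posp u n + t * negp u n)^P)
        - (1/q) * (posp u n + negp u n)^(P-1) * ((1 - s powr q) * posp u n + (1 - t powr q) * negp u n))"
  define C where "C = Cf (u n) - Cf (gam u s t n) + ((1 - s powr q)/q) * (Lf (u n) * posp u n) + ((1 - t powr q)/q) * (Lf (u n) * negp u n)"
  have eq: "Gt u n - Gt (gam u s t) n - ((1 - s powr q)/q) * Dt u (posp u) n - ((1 - t powr q)/q) * Dt u (negp u) n = A + B + c n * C"
    unfolding A_def B_def C_def by (rule R_eq)
  have A: "0 \<le> A" unfolding A_def using apos[of n] phi[OF posp_negp_fdiff[of u n]] by simp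
  have B: "0 \<le> B" unfolding B_def using bpos[of n] phi[of "posp u n" "negp u n"] posp_negp_val[of u n] by simp
  have Cpos: "0 \<le> C" and Cs: "s \<noteq> 1 \<Longrightarrow> 0 < u n \<Longrightarrow> 0 < C" and Ct: "t \<noteq> 1 \<Longrightarrow> u n < 0 \<Longrightarrow> 0 < C"
  proof -
    consider "0 < u n" | "u n < 0" | "u n = 0" by linarith
    hence "(0 \<le> C) \<and> (s \<noteq> 1 \<longrightarrow> 0 < u n \<longrightarrow> 0 < C) \<and> (t \<noteq> 1 \<longrightarrow> u n < 0 \<longrightarrow> 0 < C)"
    proof cases
      case 1
      have e: "C = Cf (u n) - Cf (s * u n) + ((1 - s powr q)/q) * (Lf (u n) * u n)"
        using pos_case[of u n, OF 1] unfolding C_def gam_def by simp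
      show ?thesis using c_ineq[OF s, of "u n"] 1 unfolding e by auto
    next
      case 2
      have e: "C = Cf (u n) - Cf (t * u n) + ((1 - t powr q)/q) * (Lf (u n) * u n)"
        using neg_case[of u n, OF 2] unfolding C_def gam_def by simp
      show ?thesis using c_ineq[OF t, of "u n"] 2 unfolding e by auto
    next
      case 3
      have "C = 0" using zero_case[of u n, OF 3] 3 unfolding C_def gam_def by simp
      thus ?thesis using 3 by simp
    qed
    thus "0 \<le> C" "s \<noteq> 1 \<Longrightarrow> 0 < u n \<Longrightarrow> 0 < C" "t \<noteq> 1 \<Longrightarrow> u n < 0 \<Longrightarrow> 0 < C" by auto
  qed
  have cC: "0 \<le> c n * C" using cpos[of n] Cpos by simp
  show "0 \<le> Gt u n - Gt (gam u s t) n - ((1 - s powr q)/q) * Dt u (posp u) n - ((1 - t powr q)/q) * Dt u (negp u) n"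
    unfolding eq using A B cC by simp
  show "s \<noteq> 1 \<Longrightarrow> 0 < u n \<Longrightarrow> 0 < Gt u n - Gt (gam u s t) n - ((1 - s powr q)/q) * Dt u (posp u) n - ((1 - t powr q)/q) * Dt u (negp u) n"
    unfolding eq using A B cpos[of n] Cs by (simp add: add_nonneg_pos)
  show "t \<noteq> 1 \<Longrightarrow> u n < 0 \<Longrightarrow> 0 < Gt u n - Gt (gam u s t) n - ((1 - s powr q)/q) * Dt u (posp u) n - ((1 - t powr q)/q) * Dt u (negp u) n"
    unfolding eq using A B cpos[of n] Ct by (simp add: add_nonneg_pos)
qed


lemma pos_sum_strict:
  fixes f :: "int \<Rightarrow> real"
  assumes "f summable_on UNIV" "\<And>n. 0 \<le> f n" "0 < f k"
  shows "0 < infsum f UNIV"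
  using has_sum_strict_mono[OF has_sum_0[of UNIV "\<lambda>_. 0"] has_sum_infsum[OF assms(1)], of k] assms(2,3)
  by auto

lemma powP: "(x::real) ^ (P-1) * x = x ^ P" using P2 by (cases P) (auto simp: mult.commute)

lemma Eok_scale: "Eok u \<Longrightarrow> Eok (\<lambda>n. s * u n)"
  using Eok_lin[of u u s 0] by simp

lemma fdiff_scale: "fdiff (\<lambda>n. s * u n) n = s * fdiff u n"
  by (simp add: fdiff_def algebra_simps)

lemma Dspace_Eok: "w \<in> Dspace p q r a b c \<Longrightarrow> Eok w"
  by (simp add: Dspace_def Espace_iff)

lemma Hf_posp_summable: "Eok u \<Longrightarrow> (\<lambda>n. c n * Hf (posp u n)) summable_on UNIV"
proof -
  assume E: "Eok u"
  obtain B where B: "B > 0" "\<And>n. \<bar>u n\<bar> \<le> B" using Eok_bdd[OF E] by blast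
  have pb: "\<bar>posp u n\<bar> \<le> B" for n using B(1) B(2)[of n] by (simp add: posp_def abs_le_iff)
  show ?thesis
  proof (rule sumcmp[OF csum_mult[of "r * B * LB B"]])
    fix n
    have "\<bar>Hf (posp u n)\<bar> \<le> r * B * LB B" by (rule Hf_bound2[OF pb])
    thus "\<bar>c n * Hf (posp u n)\<bar> \<le> c n * (r * B * LB B)"
      using cpos[of n] by (simp add: abs_mult mult_left_mono)
  qed
qed

lemma Bpos:
  assumes E: "Eok u" and nz: "posp u \<noteq> (\<lambda>_. 0)"
  shows "0 < infsum (\<lambda>n. b n * (posp u n)^P) UNIV"
proof -
  obtain k where k: "posp u k \<noteq> 0" using nz by auto
  hence "0 < posp u k" by (simp add: posp_def max_def split: if_splits)
  hence "0 < b k * (posp u k)^P" using bpos[of k] by simp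
  moreover have "(\<lambda>n. b n * (posp u n)^P) summable_on UNIV" using Eok_posp[OF E] by (simp add: Eok_def)
  ultimately show ?thesis
    by (intro pos_sum_strict[of _ k]) (auto intro!: mult_nonneg_nonneg less_imp_le[OF bpos] pw_nonneg evP)
qed

lemma SM:
  assumes E: "Eok u" and N1: "dIfun p q r a b c u (posp u) = 0" and N2: "dIfun p q r a b c u (negp u) = 0"
    and s: "0 < s" and t: "0 < t"
  shows "Ifun p q r a b c (gam u s t) \<le> Ifun p q r a b c u"
    and "(s \<noteq> 1 \<and> posp u \<noteq> (\<lambda>_. 0)) \<or> (t \<noteq> 1 \<and> negp u \<noteq> (\<lambda>_. 0)) \<Longrightarrow>
         Ifun p q r a b c (gam u s t) < Ifun p q r a b c u"
proof -
  define R where "R n = Gt u n - Gt (gam u s t) n - ((1 - s powr q)/q) * Dt u (posp u) n - ((1 - t powr q)/q) * Dt u (negp u) n" for n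
  have Eg: "Eok (gam u s t)" by (rule Eok_gam[OF E])
  have s1: "Gt u summable_on UNIV" "Gt (gam u s t) summable_on UNIV"
    using Gt_summable E Eg by auto
  have s2: "Dt u (posp u) summable_on UNIV" "Dt u (negp u) summable_on UNIV"
    using Dt_summable E Eok_posp Eok_negp by auto
  have sR: "R summable_on UNIV" unfolding R_def
    by (intro summable_on_diff' summable_on_cmult_right s1 s2)
  have "infsum R UNIV = infsum (Gt u) UNIV - infsum (Gt (gam u s t)) UNIV
      - ((1 - s powr q)/q) * infsum (Dt u (posp u)) UNIV - ((1 - t powr q)/q) * infsum (Dt u (negp u)) UNIV"
    unfolding R_def
    by (subst infsum_diff', (intro summable_on_diff' summable_on_cmult_right s1 s2)+,
        subst infsum_diff', (intro summable_on_diff' summable_on_cmult_right s1 s2)+,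
        subst infsum_diff', (intro summable_on_diff' summable_on_cmult_right s1 s2)+)
       (simp only: infsum_cmult_right')
  also have "\<dots> = Ifun p q r a b c u - Ifun p q r a b c (gam u s t)"
    using N1 N2 by (simp add: Ifun_eq[OF E] Ifun_eq[OF Eg] dIfun_eq[OF E Eok_posp[OF E]] dIfun_eq[OF E Eok_negp[OF E]])
  finally have eqR: "infsum R UNIV = Ifun p q r a b c u - Ifun p q r a b c (gam u s t)" .
  have Rn: "0 \<le> R n" for n unfolding R_def by (rule R_nonneg(1)[OF s t])
  show "Ifun p q r a b c (gam u s t) \<le> Ifun p q r a b c u"
    using infsum_nonneg[of UNIV R] Rn eqR by auto
  assume h: "(s \<noteq> 1 \<and> posp u \<noteq> (\<lambda>_. 0)) \<or> (t \<noteq> 1 \<and> negp u \<noteq> (\<lambda>_. 0))"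
  obtain k where k: "0 < R k"
  proof (cases "s \<noteq> 1 \<and> posp u \<noteq> (\<lambda>_. 0)")
    case True
    then obtain k where "posp u k \<noteq> 0" by auto
    hence "0 < u k" by (simp add: posp_def max_def split: if_splits)
    thus ?thesis using that R_nonneg(2)[OF s t] True unfolding R_def by blast
  next
    case False
    hence T: "t \<noteq> 1 \<and> negp u \<noteq> (\<lambda>_. 0)" using h by blast
    then obtain k where "negp u k \<noteq> 0" by auto
    hence "u k < 0" by (simp add: negp_def min_def split: if_splits)
    thus ?thesis using that R_nonneg(3)[OF s t] T unfolding R_def by blast
  qed
  have "0 < infsum R UNIV" by (rule pos_sum_strict[OF sR Rn k])
  thus "Ifun p q r a b c (gam u s t) < Ifun p q r a b c u" using eqR by simp
qed

lemma Dt_pm: "Dt w (posp w) n + Dt w (negp w) n = a n * (fdiff w n)^P + b n * (w n)^P - c n * Hf (w n)"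
proof -
  have "Dt w (posp w) n + Dt w (negp w) n = a n * (fdiff w n)^(P-1) * (fdiff (posp w) n + fdiff (negp w) n)
      + b n * (w n)^(P-1) * (posp w n + negp w n) - c n * Lf (w n) * (posp w n + negp w n)"
    by (simp add: Dt_def algebra_simps)
  also have "\<dots> = a n * ((fdiff w n)^(P-1) * fdiff w n) + b n * ((w n)^(P-1) * w n) - c n * (Lf (w n) * w n)"
    unfolding fdiff_posp_negp posp_negp_sum by (simp add: algebra_simps)
  also have "\<dots> = a n * (fdiff w n)^P + b n * (w n)^P - c n * Hf (w n)" unfolding powP LfHf ..
  finally show ?thesis .
qed

lemma NN: "w \<in> Mset p q r a b c \<Longrightarrow> 0 \<le> Ifun p q r a b c w"
proof -
  assume M: "w \<in> Mset p q r a b c"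
  hence E: "Eok w" and N1: "dIfun p q r a b c w (posp w) = 0" and N2: "dIfun p q r a b c w (negp w) = 0"
    by (auto simp: Mset_def Dspace_Eok)
  have s1: "Gt w summable_on UNIV" using Gt_summable E by auto
  have s2: "Dt w (posp w) summable_on UNIV" "Dt w (negp w) summable_on UNIV"
    using Dt_summable E Eok_posp Eok_negp by auto
  define R where "R n = Gt w n - (1/q) * Dt w (posp w) n - (1/q) * Dt w (negp w) n" for n
  have "infsum R UNIV = infsum (Gt w) UNIV - (1/q) * infsum (Dt w (posp w)) UNIV - (1/q) * infsum (Dt w (negp w)) UNIV"
    unfolding R_def
    by (subst infsum_diff', (intro summable_on_diff' summable_on_cmult_right s1 s2)+,
        subst infsum_diff', (intro summable_on_diff' summable_on_cmult_right s1 s2)+)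
       (simp only: infsum_cmult_right')
  also have "\<dots> = Ifun p q r a b c w"
    using N1 N2 by (simp add: Ifun_eq[OF E] dIfun_eq[OF E Eok_posp[OF E]] dIfun_eq[OF E Eok_negp[OF E]])
  finally have eq: "infsum R UNIV = Ifun p q r a b c w" .
  have "0 \<le> R n" for n
  proof -
    have "R n = Gt w n - (1/q) * (Dt w (posp w) n + Dt w (negp w) n)" unfolding R_def by (simp add: algebra_simps)
    also have "\<dots> = (1/p - 1/q) * (a n * (fdiff w n)^P + b n * (w n)^P) + c n * (r / q\<^sup>2 * \<bar>w n\<bar> powr q)"
      unfolding Dt_pm Gt_def Cf_def by (simp add: algebra_simps)
    also have "0 \<le> \<dots>"
    proof -
      have h1: "0 \<le> 1/p - 1/q" using ppos pq by (simp add: frac_le)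
      have h2: "0 \<le> a n * (fdiff w n)^P + b n * (w n)^P"
        using apos[of n] bpos[of n] evP by (intro add_nonneg_nonneg mult_nonneg_nonneg) (auto simp: pw_nonneg)
      have h3: "0 \<le> c n * (r / q\<^sup>2 * \<bar>w n\<bar> powr q)" using cpos[of n] rpos by simp
      show ?thesis using mult_nonneg_nonneg[OF h1 h2] h3 by linarith
    qed
    finally show ?thesis .
  qed
  thus ?thesis using infsum_nonneg[of UNIV R] eq by auto
qed

lemma BL1:
  assumes E: "Eok u" and nz: "posp u \<noteq> (\<lambda>_. 0)"
  shows "\<exists>d0>0. d0 \<le> 1/2 \<and> (\<forall>s t. 0 < s \<longrightarrow> s \<le> d0 \<longrightarrow> 0 < t \<longrightarrow>
           0 < dIfun p q r a b c (gam u s t) (posp (gam u s t)))"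
proof -
  define B where "B = infsum (\<lambda>n. b n * (posp u n)^P) UNIV"
  define H where "H = infsum (\<lambda>n. c n * Hf (posp u n)) UNIV"
  have B: "0 < B" unfolding B_def by (rule Bpos[OF E nz])
  have sB: "(\<lambda>n. b n * (posp u n)^P) summable_on UNIV" using Eok_posp[OF E] by (simp add: Eok_def)
  have sH: "(\<lambda>n. c n * Hf (posp u n)) summable_on UNIV" by (rule Hf_posp_summable[OF E])
  define d0 where "d0 = min (1/2) ((B / (\<bar>H\<bar> + 1)) powr (1 / (q - p)))"
  have qp: "0 < q - p" using pq by simp
  have d0: "0 < d0" "d0 \<le> 1/2" unfolding d0_def using B by auto
  show ?thesis
  proof (intro exI[of _ d0] conjI d0 allI impI)
    fix s t :: real assume s: "0 < s" "s \<le> d0" and t: "0 < t"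
    have s1: "s \<le> 1" using s d0 by simp
    have Eg: "Eok (gam u s t)" by (rule Eok_gam[OF E])
    have Ez: "Eok (\<lambda>n. s * posp u n)" by (rule Eok_scale[OF Eok_posp[OF E]])
    have "dIfun p q r a b c (gam u s t) (posp (gam u s t)) = infsum (Dt (gam u s t) (\<lambda>n. s * posp u n)) UNIV"
      unfolding posp_gam[OF s(1) t] by (rule dIfun_eq[OF Eg Ez])
    also have "\<dots> \<ge> infsum (\<lambda>n. s^P * (b n * (posp u n)^P) - s powr q * (c n * Hf (posp u n))) UNIV"
    proof (rule infsum_mono)
      show "(\<lambda>n. s^P * (b n * (posp u n)^P) - s powr q * (c n * Hf (posp u n))) summable_on UNIV"
        by (intro summable_on_diff' summable_on_cmult_right sB sH)
      show "Dt (gam u s t) (\<lambda>n. s * posp u n) summable_on UNIV" by (rule Dt_summable[OF Eg Ez])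
      fix n
      have A: "0 \<le> a n * (fdiff (gam u s t) n)^(P-1) * fdiff (\<lambda>n. s * posp u n) n"
      proof -
        have "0 \<le> (s * fdiff (posp u) n + t * fdiff (negp u) n)^(P-1) * fdiff (posp u) n"
          using s t by (intro sign_odd posp_negp_fdiff) auto
        hence "0 \<le> a n * s * ((s * fdiff (posp u) n + t * fdiff (negp u) n)^(P-1) * fdiff (posp u) n)"
          using apos[of n] s by simp
        thus ?thesis unfolding fdiff_gam fdiff_scale by (simp add: algebra_simps)
      qed
      have Bn: "(gam u s t n)^(P-1) * (s * posp u n) = s^P * (posp u n)^P"
      proof (cases "0 < u n")
        case True
        hence "gam u s t n = s * posp u n" using pos_case[of u n] by (simp add: gam_def)
        thus ?thesis using powP[of "s * posp u n"] by (simp add: power_mult_distrib)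
      next
        case False
        hence "posp u n = 0" by (simp add: posp_def)
        thus ?thesis using P2 by simp
      qed
      have Cn: "Lf (gam u s t n) * (s * posp u n) = Hf (s * posp u n)"
      proof (cases "0 < u n")
        case True
        hence "gam u s t n = s * posp u n" using pos_case[of u n] by (simp add: gam_def)
        thus ?thesis by (simp add: LfHf)
      next
        case False
        hence "posp u n = 0" by (simp add: posp_def)
        thus ?thesis by (simp add: Hf_def)
      qed
      have "c n * Hf (s * posp u n) \<le> c n * (s powr q * Hf (posp u n))"
        using Hf_posp_nonneg_part[OF s(1) s1, of u n] cpos[of n] by (intro mult_left_mono) auto
      hence "s^P * (b n * (posp u n)^P) - s powr q * (c n * Hf (posp u n))
          \<le> a n * (fdiff (gam u s t) n)^(P-1) * fdiff (\<lambda>n. s * posp u n) n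
             + b n * ((gam u s t n)^(P-1) * (s * posp u n)) - c n * (Lf (gam u s t n) * (s * posp u n))"
        using A unfolding Bn Cn by (simp add: algebra_simps)
      thus "s^P * (b n * (posp u n)^P) - s powr q * (c n * Hf (posp u n)) \<le> Dt (gam u s t) (\<lambda>n. s * posp u n) n"
        unfolding Dt_def by (simp add: algebra_simps)
    qed
    also have "infsum (\<lambda>n. s^P * (b n * (posp u n)^P) - s powr q * (c n * Hf (posp u n))) UNIV
        = s^P * B - s powr q * H"
      unfolding B_def H_def
      by (subst infsum_diff', (intro summable_on_cmult_right sB sH)+) (simp only: infsum_cmult_right')
    finally have ge: "s^P * B - s powr q * H \<le> dIfun p q r a b c (gam u s t) (posp (gam u s t))" .
    have sq: "s powr q = s^P * s powr (q - p)"
    proof -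
      have "s powr q = s powr (p + (q - p))" by simp
      also have "\<dots> = s powr p * s powr (q - p)" by (rule powr_add)
      also have "s powr p = s^P" using s pP by (simp add: powr_realpow)
      finally show ?thesis .
    qed
    have "s powr (q - p) \<le> d0 powr (q - p)" using s qp by (intro powr_mono2) auto
    also have "\<dots> \<le> ((B / (\<bar>H\<bar> + 1)) powr (1 / (q - p))) powr (q - p)"
      unfolding d0_def using qp d0 by (intro powr_mono2) auto
    also have "\<dots> = B / (\<bar>H\<bar> + 1)" using qp B by (simp add: powr_powr)
    finally have sqp: "s powr (q - p) \<le> B / (\<bar>H\<bar> + 1)" .
    have "s powr q * H \<le> s^P * (s powr (q - p) * \<bar>H\<bar>)"
      unfolding sq using s by (simp add: mult.assoc mult_left_mono)
    also have "\<dots> \<le> s^P * (B / (\<bar>H\<bar> + 1) * \<bar>H\<bar>)"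
      using sqp s by (intro mult_left_mono mult_right_mono) auto
    also have "\<dots> < s^P * B"
    proof -
      have "B / (\<bar>H\<bar> + 1) * \<bar>H\<bar> < B" using B by (simp add: field_simps)
      moreover have "0 < s^P" using s by simp
      ultimately show ?thesis by (metis mult_strict_left_mono)
    qed
    finally show "0 < dIfun p q r a b c (gam u s t) (posp (gam u s t))" using ge by linarith
  qed
qed

lemma BL2:
  assumes E: "Eok u" and nz: "posp u \<noteq> (\<lambda>_. 0)" and N: "dIfun p q r a b c u (posp u) = 0"
    and s: "1 < s" and t: "0 < t" "t \<le> s"
  shows "dIfun p q r a b c (gam u s t) (posp (gam u s t)) < 0"
proof -
  define Kn where "Kn n = a n * (fdiff u n)^(P-1) * fdiff (posp u) n + b n * (posp u n)^P" for n
  have sB: "(\<lambda>n. b n * (posp u n)^P) summable_on UNIV" using Eok_posp[OF E] by (simp add: Eok_def)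
  have sH: "(\<lambda>n. c n * Hf (posp u n)) summable_on UNIV" by (rule Hf_posp_summable[OF E])
  have DtK: "Dt u (posp u) n = Kn n - c n * Hf (posp u n)" for n
  proof -
    have b1: "(u n)^(P-1) * posp u n = (posp u n)^P"
    proof (cases "0 < u n")
      case True thus ?thesis using pos_case[of u n] powP[of "u n"] by simp
    next
      case False hence "posp u n = 0" by (simp add: posp_def)
      thus ?thesis using P2 by simp
    qed
    have c1: "Lf (u n) * posp u n = Hf (posp u n)"
    proof (cases "0 < u n")
      case True thus ?thesis using pos_case[of u n] by (simp add: LfHf)
    next
      case False hence "posp u n = 0" by (simp add: posp_def)
      thus ?thesis by (simp add: Hf_def)
    qed
    show ?thesis unfolding Dt_def Kn_def using b1 c1 by (simp add: algebra_simps)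
  qed
  have sD: "Dt u (posp u) summable_on UNIV" using Dt_summable E Eok_posp by auto
  have sK: "Kn summable_on UNIV"
  proof -
    have "(\<lambda>n. Dt u (posp u) n + c n * Hf (posp u n)) summable_on UNIV" by (intro summable_on_add sD sH)
    thus ?thesis unfolding DtK by simp
  qed
  define K where "K = infsum Kn UNIV"
  define H where "H = infsum (\<lambda>n. c n * Hf (posp u n)) UNIV"
  have KH: "K = H"
  proof -
    have "0 = infsum (Dt u (posp u)) UNIV" using N dIfun_eq[OF E Eok_posp[OF E]] by simp
    also have "\<dots> = infsum (\<lambda>n. Kn n - c n * Hf (posp u n)) UNIV" unfolding DtK ..
    also have "\<dots> = K - H" unfolding K_def H_def by (rule infsum_diff'[OF sK sH])
    finally show ?thesis by simp
  qed
  have aK: "0 \<le> a n * (fdiff u n)^(P-1) * fdiff (posp u) n" for n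
  proof -
    have "0 \<le> (1 * fdiff (posp u) n + 1 * fdiff (negp u) n)^(P-1) * fdiff (posp u) n"
      by (intro sign_odd posp_negp_fdiff) auto
    hence "0 \<le> (fdiff u n)^(P-1) * fdiff (posp u) n" unfolding fdiff_posp_negp[of u n, symmetric] by simp
    thus ?thesis using apos[of n] by (simp add: mult.assoc)
  qed
  have "0 < infsum (\<lambda>n. b n * (posp u n)^P) UNIV" by (rule Bpos[OF E nz])
  also have "\<dots> \<le> K" unfolding K_def
    by (rule infsum_mono[OF sB sK]) (use aK in \<open>simp add: Kn_def\<close>)
  finally have K: "0 < K" .
  have Eg: "Eok (gam u s t)" by (rule Eok_gam[OF E])
  have Ez: "Eok (\<lambda>n. s * posp u n)" by (rule Eok_scale[OF Eok_posp[OF E]])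
  have s0: "0 < s" using s by simp
  have "dIfun p q r a b c (gam u s t) (posp (gam u s t)) = infsum (Dt (gam u s t) (\<lambda>n. s * posp u n)) UNIV"
    unfolding posp_gam[OF s0 t(1)] by (rule dIfun_eq[OF Eg Ez])
  also have "\<dots> \<le> infsum (\<lambda>n. s^P * Kn n - s powr q * (c n * Hf (posp u n))) UNIV"
  proof (rule infsum_mono)
    show "(\<lambda>n. s^P * Kn n - s powr q * (c n * Hf (posp u n))) summable_on UNIV"
      by (intro summable_on_diff' summable_on_cmult_right sK sH)
    show "Dt (gam u s t) (\<lambda>n. s * posp u n) summable_on UNIV" by (rule Dt_summable[OF Eg Ez])
    fix n
    have A: "a n * (fdiff (gam u s t) n)^(P-1) * fdiff (\<lambda>n. s * posp u n) n
        \<le> s^P * (a n * (fdiff u n)^(P-1) * fdiff (posp u) n)"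
    proof -
      have sp: "s^P = s^(P-1) * s" using powP[of s] by simp
      have "a n * (fdiff (gam u s t) n)^(P-1) * fdiff (\<lambda>n. s * posp u n) n
          = a n * s * ((s * fdiff (posp u) n + t * fdiff (negp u) n)^(P-1) * fdiff (posp u) n)"
        unfolding fdiff_gam fdiff_scale by (simp add: algebra_simps)
      also have "\<dots> \<le> a n * s * (s^(P-1) * ((fdiff (posp u) n + fdiff (negp u) n)^(P-1) * fdiff (posp u) n))"
        using apos[of n] s0 t by (intro mult_left_mono sign_odd_le posp_negp_fdiff) auto
      also have "\<dots> = s^P * (a n * (fdiff u n)^(P-1) * fdiff (posp u) n)"
        unfolding fdiff_posp_negp sp by (simp add: algebra_simps)
      finally show ?thesis .
    qed
    have Bn: "(gam u s t n)^(P-1) * (s * posp u n) = s^P * (posp u n)^P"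
    proof (cases "0 < u n")
      case True
      hence "gam u s t n = s * posp u n" using pos_case[of u n] by (simp add: gam_def)
      thus ?thesis using powP[of "s * posp u n"] by (simp add: power_mult_distrib)
    next
      case False
      hence "posp u n = 0" by (simp add: posp_def)
      thus ?thesis using P2 by simp
    qed
    have Cn: "Lf (gam u s t n) * (s * posp u n) = Hf (s * posp u n)"
    proof (cases "0 < u n")
      case True
      hence "gam u s t n = s * posp u n" using pos_case[of u n] by (simp add: gam_def)
      thus ?thesis by (simp add: LfHf)
    next
      case False
      hence "posp u n = 0" by (simp add: posp_def)
      thus ?thesis by (simp add: Hf_def)
    qed
    have "c n * (s powr q * Hf (posp u n)) \<le> c n * Hf (s * posp u n)"
      using Hf_posp_ge[of s u n] s cpos[of n] by (intro mult_left_mono) auto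
    hence "a n * (fdiff (gam u s t) n)^(P-1) * fdiff (\<lambda>n. s * posp u n) n
             + b n * ((gam u s t n)^(P-1) * (s * posp u n)) - c n * (Lf (gam u s t n) * (s * posp u n))
          \<le> s^P * Kn n - s powr q * (c n * Hf (posp u n))"
      using A unfolding Bn Cn Kn_def by (simp add: algebra_simps)
    thus "Dt (gam u s t) (\<lambda>n. s * posp u n) n \<le> s^P * Kn n - s powr q * (c n * Hf (posp u n))"
      unfolding Dt_def by (simp add: algebra_simps)
  qed
  also have "\<dots> = s^P * K - s powr q * H"
    unfolding K_def H_def
    by (subst infsum_diff', (intro summable_on_cmult_right sK sH)+) (simp only: infsum_cmult_right')
  also have "\<dots> = (s^P - s powr q) * K" unfolding KH by (simp add: algebra_simps)
  also have "\<dots> < 0"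
  proof -
    have "s^P = s powr p" using s0 pP by (simp add: powr_realpow)
    also have "\<dots> < s powr q" using s pq by simp
    finally show ?thesis using K by (simp add: mult_neg_pos)
  qed
  finally show ?thesis .
qed

end

lemma dist_pair_le: "dist (a, b) (c, d) \<le> dist a c + dist b d"
proof -
  have "dist (a, b) (c, d) = sqrt ((dist a c)\<^sup>2 + (dist b d)\<^sup>2)" by (rule dist_Pair_Pair)
  also have "\<dots> \<le> dist a c + dist b d" by (rule sqrt_sum_squares_le_sum) auto
  finally show ?thesis .
qed

definition Wf :: "(int \<Rightarrow> real) \<Rightarrow> (int \<Rightarrow> real) \<Rightarrow> real \<Rightarrow> real \<Rightarrow> real \<Rightarrow> int \<Rightarrow> real" where
  "Wf u v s t x = (\<lambda>n. s * posp u n + t * negp u n - x * v n)"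

lemma fdiff_Wf: "fdiff (Wf u v s t x) n = s * fdiff (posp u) n + t * fdiff (negp u) n - x * fdiff v n"
  by (simp add: Wf_def fdiff_def algebra_simps)

lemma Wf_app: "Wf u v s t x n = s * posp u n + t * negp u n - x * v n"
  by (simp add: Wf_def)

lemma Wf0: "Wf u v s t 0 = gam u s t"
  by (simp add: Wf_def gam_def)

context LS begin

lemma Eok_Wf: "Eok u \<Longrightarrow> Eok v \<Longrightarrow> Eok (Wf u v s t x)"
proof -
  assume E: "Eok u" and V: "Eok v"
  have "Wf u v s t x = (\<lambda>n. 1 * gam u s t n + (-x) * v n)" by (simp add: Wf_def gam_def)
  thus ?thesis using Eok_lin[OF Eok_gam[OF E, of s t] V, of 1 "-x"] by simp
qed

definition e1 :: "(int \<Rightarrow> real) \<Rightarrow> (int \<Rightarrow> real) \<Rightarrow> int \<Rightarrow> real" where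
  "e1 u v n = \<bar>fdiff (posp u) n\<bar> + \<bar>fdiff (negp u) n\<bar> + \<bar>fdiff v n\<bar>"
definition e0 :: "(int \<Rightarrow> real) \<Rightarrow> (int \<Rightarrow> real) \<Rightarrow> int \<Rightarrow> real" where
  "e0 u v n = \<bar>u n\<bar> + \<bar>v n\<bar>"

lemma env:
  assumes E: "Eok u" and V: "Eok v" and Th: "0 \<le> Th"
  shows "\<exists>M. M summable_on UNIV \<and> (\<forall>n w z. \<bar>fdiff w n\<bar> \<le> Th * e1 u v n \<longrightarrow> \<bar>fdiff z n\<bar> \<le> Th * e1 u v n
            \<longrightarrow> \<bar>w n\<bar> \<le> Th * e0 u v n \<longrightarrow> \<bar>z n\<bar> \<le> Th * e0 u v n \<longrightarrow> \<bar>Dt w z n\<bar> \<le> M n)"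
proof -
  obtain Bu where Bu: "Bu > 0" "\<And>n. \<bar>u n\<bar> \<le> Bu" using Eok_bdd[OF E] by blast
  obtain Bv where Bv: "Bv > 0" "\<And>n. \<bar>v n\<bar> \<le> Bv" using Eok_bdd[OF V] by blast
  define BW where "BW = Th * (Bu + Bv)"
  have e0B: "Th * e0 u v n \<le> BW" for n
    unfolding BW_def e0_def using Bu(2)[of n] Bv(2)[of n] Th by (intro mult_left_mono) auto
  define M where "M n = 2 * Th^P * (a n * (e1 u v n)^P) + 2 * Th^P * (b n * (e0 u v n)^P) + c n * (r * LB BW * BW)" for n
  have Sa: "(\<lambda>n. a n * (e1 u v n)^P) summable_on UNIV"
  proof (rule sumcmp)
    show "(\<lambda>n. 3^P * (a n * (fdiff (posp u) n)^P + a n * (fdiff (negp u) n)^P + a n * (fdiff v n)^P)) summable_on UNIV"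
      using Eok_posp[OF E] Eok_negp[OF E] V unfolding Eok_def
      by (intro summable_on_cmult_right summable_on_add) auto
    fix n
    have "(e1 u v n)^P \<le> 3^P * (\<bar>fdiff (posp u) n\<bar>^P + \<bar>fdiff (negp u) n\<bar>^P + \<bar>fdiff v n\<bar>^P)"
      unfolding e1_def by (rule pw_sum3) auto
    hence "a n * (e1 u v n)^P \<le> a n * (3^P * ((fdiff (posp u) n)^P + (fdiff (negp u) n)^P + (fdiff v n)^P))"
      using apos[of n] evP by (simp add: power_even_abs)
    moreover have "0 \<le> a n * (e1 u v n)^P" using apos[of n] unfolding e1_def by simp
    ultimately show "\<bar>a n * (e1 u v n)^P\<bar> \<le> 3^P * (a n * (fdiff (posp u) n)^P + a n * (fdiff (negp u) n)^P + a n * (fdiff v n)^P)"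
      by (simp add: algebra_simps)
  qed
  have Sb: "(\<lambda>n. b n * (e0 u v n)^P) summable_on UNIV"
  proof (rule sumcmp)
    show "(\<lambda>n. 2^P * (b n * (u n)^P + b n * (v n)^P)) summable_on UNIV"
      using E V unfolding Eok_def by (intro summable_on_cmult_right summable_on_add) auto
    fix n
    have "(e0 u v n)^P \<le> 2^P * (\<bar>u n\<bar>^P + \<bar>v n\<bar>^P)"
      unfolding e0_def by (rule pw_sum2[OF evP])
    hence "b n * (e0 u v n)^P \<le> b n * (2^P * ((u n)^P + (v n)^P))"
      using bpos[of n] evP by (simp add: power_even_abs)
    moreover have "0 \<le> b n * (e0 u v n)^P" using bpos[of n] unfolding e0_def by simp
    ultimately show "\<bar>b n * (e0 u v n)^P\<bar> \<le> 2^P * (b n * (u n)^P + b n * (v n)^P)"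
      by (simp add: algebra_simps)
  qed
  have SM: "M summable_on UNIV" unfolding M_def
    by (intro summable_on_add summable_on_cmult_right Sa Sb csum_mult)
  show ?thesis
  proof (intro exI[of _ M] conjI SM allI impI)
    fix n w z
    assume h1: "\<bar>fdiff w n\<bar> \<le> Th * e1 u v n" and h2: "\<bar>fdiff z n\<bar> \<le> Th * e1 u v n"
      and h3: "\<bar>w n\<bar> \<le> Th * e0 u v n" and h4: "\<bar>z n\<bar> \<le> Th * e0 u v n"
    have A: "\<bar>a n * (fdiff w n)^(P-1) * fdiff z n\<bar> \<le> 2 * Th^P * (a n * (e1 u v n)^P)"
    proof -
      have "\<bar>(fdiff w n)^(P-1) * fdiff z n\<bar> \<le> (fdiff w n)^P + (fdiff z n)^P"
        using evP P2 by (intro pw_mix) auto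
      also have "\<dots> \<le> (Th * e1 u v n)^P + (Th * e1 u v n)^P"
        using h1 h2 evP by (intro add_mono pw_mono) auto
      finally have "\<bar>(fdiff w n)^(P-1) * fdiff z n\<bar> \<le> 2 * (Th^P * (e1 u v n)^P)"
        by (simp add: power_mult_distrib)
      hence "a n * \<bar>(fdiff w n)^(P-1) * fdiff z n\<bar> \<le> a n * (2 * (Th^P * (e1 u v n)^P))"
        using apos[of n] by (intro mult_left_mono) auto
      thus ?thesis using apos[of n] by (simp add: abs_mult algebra_simps)
    qed
    have B: "\<bar>b n * (w n)^(P-1) * z n\<bar> \<le> 2 * Th^P * (b n * (e0 u v n)^P)"
    proof -
      have "\<bar>(w n)^(P-1) * z n\<bar> \<le> (w n)^P + (z n)^P"
        using evP P2 by (intro pw_mix) auto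
      also have "\<dots> \<le> (Th * e0 u v n)^P + (Th * e0 u v n)^P"
        using h3 h4 evP by (intro add_mono pw_mono) auto
      finally have "\<bar>(w n)^(P-1) * z n\<bar> \<le> 2 * (Th^P * (e0 u v n)^P)"
        by (simp add: power_mult_distrib)
      hence "b n * \<bar>(w n)^(P-1) * z n\<bar> \<le> b n * (2 * (Th^P * (e0 u v n)^P))"
        using bpos[of n] by (intro mult_left_mono) auto
      thus ?thesis using bpos[of n] by (simp add: abs_mult algebra_simps)
    qed
    have C: "\<bar>c n * Lf (w n) * z n\<bar> \<le> c n * (r * LB BW * BW)"
    proof -
      have "\<bar>Lf (w n)\<bar> \<le> r * LB BW" using h3 e0B[of n] by (intro Lf_bound2) auto
      moreover have "\<bar>z n\<bar> \<le> BW" using h4 e0B[of n] by auto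
      ultimately have "\<bar>Lf (w n)\<bar> * \<bar>z n\<bar> \<le> r * LB BW * BW" by (intro mult_mono) auto
      thus ?thesis using cpos[of n] by (simp add: abs_mult mult_left_mono mult.assoc)
    qed
    show "\<bar>Dt w z n\<bar> \<le> M n" unfolding Dt_def M_def using A B C by linarith
  qed
qed

lemma Cf_deriv_chain:
  "(g has_real_derivative g') (at x) \<Longrightarrow> ((\<lambda>x. Cf (g x)) has_real_derivative (- Lf (g x)) * g') (at x)"
  by (rule DERIV_chain2[OF Cf_deriv])

lemma Lf_cont_comp: "continuous_on S g \<Longrightarrow> continuous_on S (\<lambda>x. Lf (g x))"
  using continuous_on_compose2[OF Lf_cont, of S g] by auto


lemma lin3_bound:
  fixes s t x A B C :: real
  assumes "\<bar>s\<bar> \<le> 2" "\<bar>t\<bar> \<le> 2" "\<bar>x\<bar> \<le> 2"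
  shows "\<bar>s * A + t * B - x * C\<bar> \<le> 2 * (\<bar>A\<bar> + \<bar>B\<bar> + \<bar>C\<bar>)"
proof -
  have "\<bar>s * A\<bar> \<le> 2 * \<bar>A\<bar>" "\<bar>t * B\<bar> \<le> 2 * \<bar>B\<bar>" "\<bar>x * C\<bar> \<le> 2 * \<bar>C\<bar>"
    using assms by (auto simp: abs_mult intro: mult_right_mono)
  moreover have "\<bar>s * A + t * B - x * C\<bar> \<le> \<bar>s * A\<bar> + \<bar>t * B\<bar> + \<bar>x * C\<bar>" by linarith
  moreover have "2 * (\<bar>A\<bar> + \<bar>B\<bar> + \<bar>C\<bar>) = 2 * \<bar>A\<bar> + 2 * \<bar>B\<bar> + 2 * \<bar>C\<bar>" by simp
  ultimately show ?thesis by linarith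
qed

lemma Gt_deriv:
  "((\<lambda>y. Gt (Wf u v s t y) n) has_real_derivative (- Dt (Wf u v s t y) v n)) (at y)"
proof -
  define A where "A = s * fdiff (posp u) n + t * fdiff (negp u) n"
  define C where "C = s * posp u n + t * negp u n"
  have e: "(\<lambda>y. Gt (Wf u v s t y) n) = (\<lambda>y. (1/p) * (a n * (A - y * fdiff v n)^P + b n * (C - y * v n)^P) + c n * Cf (C - y * v n))"
    by (rule ext) (simp add: Gt_def fdiff_Wf Wf_app A_def C_def)
  have d: "- Dt (Wf u v s t y) v n = (1/p) * (a n * (real P * (A - y * fdiff v n)^(P-1) * (- fdiff v n)) + b n * (real P * (C - y * v n)^(P-1) * (- v n))) + c n * ((- Lf (C - y * v n)) * (- v n))"
    using pP P2 by (simp add: Dt_def fdiff_Wf Wf_app A_def C_def field_simps)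
  have cd: "((\<lambda>y. Cf (C - y * v n)) has_real_derivative Lf (C - y * v n) * v n) (at y)"
  proof -
    have "((\<lambda>y. C - y * v n) has_real_derivative - v n) (at y)"
      by (auto intro!: derivative_eq_intros)
    from Cf_deriv_chain[OF this] show ?thesis by simp
  qed
  show ?thesis unfolding e d
    using ppos by (auto intro!: derivative_eq_intros cd)
qed

lemma DS:
  assumes E: "Eok u" and V: "Eok v" and D: "0 < infsum (Dt u v) UNIV"
  shows "\<exists>\<rho>>0. \<forall>s t x. \<bar>s - 1\<bar> < \<rho> \<longrightarrow> \<bar>t - 1\<bar> < \<rho> \<longrightarrow> 0 \<le> x \<longrightarrow> x < \<rho> \<longrightarrow>
     Ifun p q r a b c (Wf u v s t x) \<le> Ifun p q r a b c (gam u s t) - x * (infsum (Dt u v) UNIV / 2)"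
proof -
  define d where "d = infsum (Dt u v) UNIV"
  define K where "K = cball ((1::real), (1::real), (0::real)) 1"
  define f where "f n th = Dt (Wf u v (fst th) (fst (snd th)) (snd (snd th))) v n" for n th
  obtain M where M: "M summable_on UNIV" and Mb: "\<And>n w z. \<bar>fdiff w n\<bar> \<le> 2 * e1 u v n \<Longrightarrow> \<bar>fdiff z n\<bar> \<le> 2 * e1 u v n
            \<Longrightarrow> \<bar>w n\<bar> \<le> 2 * e0 u v n \<Longrightarrow> \<bar>z n\<bar> \<le> 2 * e0 u v n \<Longrightarrow> \<bar>Dt w z n\<bar> \<le> M n"
    using env[OF E V, of 2] by auto
  have Kb: "\<bar>fst th\<bar> \<le> 2 \<and> \<bar>fst (snd th)\<bar> \<le> 2 \<and> \<bar>snd (snd th)\<bar> \<le> 2" if "th \<in> K" for th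
  proof -
    have h: "dist th (1, 1, 0) \<le> 1" using that unfolding K_def by (simp add: dist_commute)
    have "dist (fst th) 1 \<le> 1" using dist_fst_le[of th "(1,1,0)"] h by simp
    moreover have h2: "dist (snd th) (1, 0) \<le> 1" using dist_snd_le[of th "(1,1,0)"] h by simp
    moreover have "dist (fst (snd th)) 1 \<le> 1" using dist_fst_le[of "snd th" "(1,0)"] h2 by simp
    moreover have "dist (snd (snd th)) 0 \<le> 1" using dist_snd_le[of "snd th" "(1,0)"] h2 by simp
    ultimately show ?thesis by (auto simp: dist_real_def)
  qed
  have fb: "\<bar>f n th\<bar> \<le> M n" if "th \<in> K" for n th
  proof -
    obtain s t x where th: "th = (s, t, x)" by (cases th) auto
    have b: "\<bar>s\<bar> \<le> 2" "\<bar>t\<bar> \<le> 2" "\<bar>x\<bar> \<le> 2" using Kb[OF that] th by auto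
    have upm: "\<bar>posp u n\<bar> + \<bar>negp u n\<bar> = \<bar>u n\<bar>" by (simp add: posp_def negp_def max_def min_def)
    show ?thesis unfolding f_def th fst_conv snd_conv
    proof (rule Mb)
      show "\<bar>fdiff (Wf u v s t x) n\<bar> \<le> 2 * e1 u v n"
        unfolding fdiff_Wf e1_def by (rule lin3_bound[OF b])
      show "\<bar>fdiff v n\<bar> \<le> 2 * e1 u v n" unfolding e1_def by simp
      show "\<bar>Wf u v s t x n\<bar> \<le> 2 * e0 u v n"
        unfolding Wf_app e0_def using lin3_bound[OF b, of "posp u n" "negp u n" "v n"] upm by simp
      show "\<bar>v n\<bar> \<le> 2 * e0 u v n" unfolding e0_def by simp
    qed
  qed
  have fc: "continuous_on K (f n)" for n
  proof -
    have "f n = (\<lambda>th. a n * (fst th * fdiff (posp u) n + fst (snd th) * fdiff (negp u) n - snd (snd th) * fdiff v n)^(P-1) * fdiff v n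
        + b n * (fst th * posp u n + fst (snd th) * negp u n - snd (snd th) * v n)^(P-1) * v n
        - c n * Lf (fst th * posp u n + fst (snd th) * negp u n - snd (snd th) * v n) * v n)"
      by (rule ext) (simp add: f_def Dt_def fdiff_Wf Wf_app)
    moreover have "continuous_on K (\<lambda>th. a n * (fst th * fdiff (posp u) n + fst (snd th) * fdiff (negp u) n - snd (snd th) * fdiff v n)^(P-1) * fdiff v n
        + b n * (fst th * posp u n + fst (snd th) * negp u n - snd (snd th) * v n)^(P-1) * v n
        - c n * Lf (fst th * posp u n + fst (snd th) * negp u n - snd (snd th) * v n) * v n)"
      by (intro continuous_intros Lf_cont_comp)
    ultimately show ?thesis by simp
  qed
  have th0: "((1::real), (1::real), (0::real)) \<in> K" unfolding K_def by simp
  have f0: "f n (1, 1, 0) = Dt u v n" for n unfolding f_def by (simp add: Wf0 gam11)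
  have d0: "0 < d/2" using D unfolding d_def by simp
  obtain rr where rr: "rr > 0" and rg: "\<forall>g::int \<Rightarrow> real \<times> real \<times> real. (\<forall>n. g n \<in> K \<and> dist (g n) (1,1,0) < rr) \<longrightarrow>
           \<bar>infsum (\<lambda>n. f n (g n)) UNIV - infsum (\<lambda>n. f n (1,1,0)) UNIV\<bar> \<le> d/2"
    using GL[OF M fb fc th0 d0] by blast
  define rho where "rho = min rr 1 / 3"
  have rho: "0 < rho" using rr unfolding rho_def by simp
  show ?thesis
  proof (intro exI[of _ rho] conjI rho allI impI)
    fix s t x :: real
    assume s: "\<bar>s - 1\<bar> < rho" and t: "\<bar>t - 1\<bar> < rho" and x: "0 \<le> x" "x < rho"
    show "Ifun p q r a b c (Wf u v s t x) \<le> Ifun p q r a b c (gam u s t) - x * (infsum (Dt u v) UNIV / 2)"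
    proof (cases "x = 0")
      case True thus ?thesis by (simp add: Wf0)
    next
      case False
      hence x0: "0 < x" using x by simp
      have "\<forall>n. \<exists>xi. 0 < xi \<and> xi < x \<and> Gt (Wf u v s t x) n - Gt (Wf u v s t 0) n = (x - 0) * (- f n (s, t, xi))"
      proof
        fix n
        show "\<exists>xi. 0 < xi \<and> xi < x \<and> Gt (Wf u v s t x) n - Gt (Wf u v s t 0) n = (x - 0) * (- f n (s, t, xi))"
          using MVT2[OF x0, of "\<lambda>y. Gt (Wf u v s t y) n" "\<lambda>y. - f n (s, t, y)"] Gt_deriv
          unfolding f_def by simp
      qed
      then obtain xi where xi: "\<And>n. 0 < xi n \<and> xi n < x \<and> Gt (Wf u v s t x) n - Gt (Wf u v s t 0) n = x * (- f n (s, t, xi n))"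
        by (metis diff_zero)
      define g where "g n = (s, t, xi n)" for n
      have gK: "g n \<in> K \<and> dist (g n) (1,1,0) < rr" for n
      proof -
        have "dist (g n) (1,1,0) \<le> dist s 1 + dist (t, xi n) (1, 0)" unfolding g_def by (rule dist_pair_le)
        also have "dist (t, xi n) (1, 0) \<le> dist t 1 + dist (xi n) 0" by (rule dist_pair_le)
        finally have "dist (g n) (1,1,0) < 3 * rho" using s t xi[of n] x by (simp add: dist_real_def)
        hence "dist (g n) (1,1,0) < min rr 1" unfolding rho_def by simp
        thus ?thesis unfolding K_def by (simp add: dist_commute)
      qed
      have sfg: "(\<lambda>n. f n (g n)) summable_on UNIV" by (rule sumcmp[OF M]) (use fb gK in auto)
      have "\<bar>infsum (\<lambda>n. f n (g n)) UNIV - infsum (\<lambda>n. f n (1,1,0)) UNIV\<bar> \<le> d/2"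
        using rg gK by blast
      moreover have "infsum (\<lambda>n. f n (1,1,0)) UNIV = d" unfolding d_def f0 ..
      ultimately have fg: "d/2 \<le> infsum (\<lambda>n. f n (g n)) UNIV" by linarith
      have Ex: "Eok (Wf u v s t x)" "Eok (Wf u v s t 0)" using Eok_Wf[OF E V] by auto
      have "Ifun p q r a b c (Wf u v s t x) - Ifun p q r a b c (Wf u v s t 0)
          = infsum (\<lambda>n. Gt (Wf u v s t x) n - Gt (Wf u v s t 0) n) UNIV"
        unfolding Ifun_eq[OF Ex(1)] Ifun_eq[OF Ex(2)]
        by (rule infsum_diff'[symmetric]) (use Gt_summable Ex in auto)
      also have "\<dots> = infsum (\<lambda>n. - x * f n (g n)) UNIV"
        using xi unfolding g_def by simp
      also have "\<dots> = - x * infsum (\<lambda>n. f n (g n)) UNIV" by (rule infsum_cmult_right')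
      also have "\<dots> \<le> - x * (d/2)" using fg x0 by simp
      finally show ?thesis unfolding Wf0 d_def by simp
    qed
  qed
qed

end

lemma fdiff_neg: "fdiff (\<lambda>n. - w n) n = - fdiff w n"
  by (simp add: fdiff_def)

lemma posp_neg: "posp (\<lambda>n. - w n) = (\<lambda>n. - negp w n)"
  by (rule ext) (simp add: posp_def negp_def max_def min_def)

lemma negp_neg: "negp (\<lambda>n. - w n) = (\<lambda>n. - posp w n)"
  by (rule ext) (simp add: posp_def negp_def max_def min_def)

lemma dIfun_neg: "dIfun p q r a b c (\<lambda>n. - w n) (\<lambda>n. - z n) = dIfun p q r a b c w z"
proof -
  have e: "(\<lambda>n. if - w n = 0 then 0 else c n * \<bar>- w n\<bar> powr (q - 2) * - w n * - z n * ln (\<bar>- w n\<bar> powr r))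
      = (\<lambda>n. if w n = 0 then 0 else c n * \<bar>w n\<bar> powr (q - 2) * w n * z n * ln (\<bar>w n\<bar> powr r))"
    by (rule ext) simp
  show ?thesis unfolding dIfun_def fdiff_neg e by simp
qed

lemma gam_neg: "gam (\<lambda>n. - u n) t s = (\<lambda>n. - gam u s t n)"
  unfolding gam_def posp_neg negp_neg by (rule ext) simp

context LS begin

lemma Dt_neg_right: "Dt w (\<lambda>n. - z n) n = - Dt w z n"
  by (simp add: Dt_def fdiff_neg algebra_simps)

lemma Eok_neg: "Eok u \<Longrightarrow> Eok (\<lambda>n. - u n)"
  using Eok_scale[of u "-1"] by simp

lemma Eok_Dspace: "Eok w \<Longrightarrow> w \<in> Dspace p q r a b c"
proof -
  assume E: "Eok w"
  obtain B where B: "B > 0" "\<And>n. \<bar>w n\<bar> \<le> B" using Eok_bdd[OF E] by blast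
  have "logterm q r c w summable_on UNIV"
  proof (rule sumcmp[OF csum_mult[of "r * B * LB B"]])
    fix n
    have "\<bar>Hf (w n)\<bar> \<le> r * B * LB B" by (rule Hf_bound2[OF B(2)])
    thus "\<bar>logterm q r c w n\<bar> \<le> c n * (r * B * LB B)"
      using cpos[of n] by (simp add: logterm_eq abs_mult mult_left_mono)
  qed
  thus ?thesis using E by (simp add: Dspace_def Espace_iff)
qed

lemma main:
  assumes u0M: "u0 \<in> Mset p q r a b c"
    and u0min: "Ifun p q r a b c u0 = (INF u \<in> Mset p q r a b c. Ifun p q r a b c u)"
  shows "\<forall>v \<in> Dspace p q r a b c. dIfun p q r a b c u0 v = 0"
proof (rule ccontr)
  assume "\<not> (\<forall>v \<in> Dspace p q r a b c. dIfun p q r a b c u0 v = 0)"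
  then obtain v0 where v0: "v0 \<in> Dspace p q r a b c" "dIfun p q r a b c u0 v0 \<noteq> 0" by blast
  have E: "Eok u0" and N1: "dIfun p q r a b c u0 (posp u0) = 0" and N2: "dIfun p q r a b c u0 (negp u0) = 0"
    and nzp: "posp u0 \<noteq> (\<lambda>_. 0)" and nzn: "negp u0 \<noteq> (\<lambda>_. 0)"
    using u0M by (auto simp: Mset_def Dspace_Eok)
  have V0: "Eok v0" using v0 Dspace_Eok by auto
  define v where "v = (if 0 < dIfun p q r a b c u0 v0 then v0 else (\<lambda>n. - v0 n))"
  have V: "Eok v" unfolding v_def using V0 Eok_neg by auto
  have D: "0 < infsum (Dt u0 v) UNIV"
  proof (cases "0 < dIfun p q r a b c u0 v0")
    case True thus ?thesis unfolding v_def using dIfun_eq[OF E V0] by simp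
  next
    case False
    hence "dIfun p q r a b c u0 v0 < 0" using v0(2) by simp
    moreover have "infsum (Dt u0 (\<lambda>n. - v0 n)) UNIV = - infsum (Dt u0 v0) UNIV"
      unfolding Dt_neg_right by (rule infsum_uminus)
    ultimately show ?thesis unfolding v_def using False dIfun_eq[OF E V0] by simp
  qed
  define d where "d = infsum (Dt u0 v) UNIV"
  have d: "0 < d" using D unfolding d_def .
  obtain rho where rho: "0 < rho" and DSr: "\<And>s t x. \<bar>s - 1\<bar> < rho \<Longrightarrow> \<bar>t - 1\<bar> < rho \<Longrightarrow> 0 \<le> x \<Longrightarrow> x < rho \<Longrightarrow>
     Ifun p q r a b c (Wf u0 v s t x) \<le> Ifun p q r a b c (gam u0 s t) - x * (d / 2)"
    using DS[OF E V D] unfolding d_def by blast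
  define m where "m = Ifun p q r a b c u0"
  have SM1: "\<And>s t. 0 < s \<Longrightarrow> 0 < t \<Longrightarrow> Ifun p q r a b c (gam u0 s t) \<le> m"
    unfolding m_def using SM(1)[OF E N1 N2] by blast
  have SM2: "\<And>s t. 0 < s \<Longrightarrow> 0 < t \<Longrightarrow> (s, t) \<noteq> (1, 1) \<Longrightarrow> Ifun p q r a b c (gam u0 s t) < m"
    unfolding m_def using SM(2)[OF E N1 N2] nzp nzn by auto
  define un where "un = (\<lambda>n. - u0 n)"
  have Eun: "Eok un" unfolding un_def by (rule Eok_neg[OF E])
  have nzun: "posp un \<noteq> (\<lambda>_. 0)"
  proof
    assume "posp un = (\<lambda>_. 0)"
    hence "negp u0 = (\<lambda>_. 0)" unfolding un_def posp_neg by (metis add.inverse_neutral minus_equation_iff)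
    thus False using nzn by simp
  qed
  have Nun: "dIfun p q r a b c un (posp un) = 0"
    unfolding un_def posp_neg dIfun_neg by (rule N2)
  obtain d1 where d1: "0 < d1" "d1 \<le> 1/2" and B1: "\<And>s t. 0 < s \<Longrightarrow> s \<le> d1 \<Longrightarrow> 0 < t \<Longrightarrow>
           0 < dIfun p q r a b c (gam u0 s t) (posp (gam u0 s t))"
    using BL1[OF E nzp] by blast
  obtain d2 where d2: "0 < d2" "d2 \<le> 1/2" and B2: "\<And>s t. 0 < s \<Longrightarrow> s \<le> d2 \<Longrightarrow> 0 < t \<Longrightarrow>
           0 < dIfun p q r a b c (gam un s t) (posp (gam un s t))"
    using BL1[OF Eun nzun] by blast
  have negp_gam_eq: "dIfun p q r a b c (gam u0 s t) (negp (gam u0 s t)) = dIfun p q r a b c (gam un t s) (posp (gam un t s))" for s t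
    unfolding un_def gam_neg posp_neg dIfun_neg ..
  define del where "del = min d1 d2"
  have del: "0 < del" "del \<le> 1/2" "del \<le> d1" "del \<le> d2" unfolding del_def using d1 d2 by auto
  obtain k where k: "0 < u0 k"
  proof -
    obtain k where "posp u0 k \<noteq> 0" using nzp by auto
    hence "0 < u0 k" by (simp add: posp_def max_def split: if_splits)
    thus ?thesis using that by blast
  qed
  obtain j where j: "u0 j < 0"
  proof -
    obtain j where "negp u0 j \<noteq> 0" using nzn by auto
    hence "u0 j < 0" by (simp add: negp_def min_def split: if_splits)
    thus ?thesis using that by blast
  qed
  define rh where "rh = min rho (1/2)"
  have rh: "0 < rh" "rh \<le> rho" "rh \<le> 1/2" unfolding rh_def using rho by auto
  define eta where "eta x = max 0 (1 - (\<bar>fst x - 1\<bar> + \<bar>snd x - 1\<bar>) / rh)" for x :: "real \<times> real"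
  have eta: "0 \<le> eta x" "eta x \<le> 1" for x
    unfolding eta_def using rh by (auto simp: divide_simps)
  have eta11: "eta (1,1) = 1" unfolding eta_def by simp
  have eta_pos: "0 < eta x \<Longrightarrow> \<bar>fst x - 1\<bar> < rh \<and> \<bar>snd x - 1\<bar> < rh" for x
  proof -
    assume "0 < eta x"
    hence "0 < 1 - (\<bar>fst x - 1\<bar> + \<bar>snd x - 1\<bar>) / rh" unfolding eta_def by simp
    hence "(\<bar>fst x - 1\<bar> + \<bar>snd x - 1\<bar>) / rh < 1" by simp
    hence "\<bar>fst x - 1\<bar> + \<bar>snd x - 1\<bar> < rh" using rh by (simp add: divide_less_eq)
    thus ?thesis by linarith
  qed
  have eta_bd: "\<bar>fst x - 1\<bar> \<ge> 1/2 \<or> \<bar>snd x - 1\<bar> \<ge> 1/2 \<Longrightarrow> eta x = 0" for x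
    using eta_pos[of x] eta(1)[of x] rh by linarith
  define ep where "ep = min (rh/2) (min (del * u0 k / (2 * (\<bar>v k\<bar> + 1))) (del * (- u0 j) / (2 * (\<bar>v j\<bar> + 1))))"
  have p1: "0 < del * u0 k / (2 * (\<bar>v k\<bar> + 1))" using del k by (intro divide_pos_pos mult_pos_pos) auto
  have p2: "0 < del * (- u0 j) / (2 * (\<bar>v j\<bar> + 1))" using del j by (intro divide_pos_pos mult_pos_pos) auto
  have ep: "0 < ep" "ep \<le> rh/2"
  proof -
    show "0 < ep" unfolding ep_def using p1 p2 rh by (simp only: min_less_iff_conj) auto
    show "ep \<le> rh/2" unfolding ep_def by (rule min.cobounded1)
  qed
  have epk: "ep * \<bar>v k\<bar> < del * u0 k"
  proof -
    have "ep * \<bar>v k\<bar> \<le> del * u0 k / (2 * (\<bar>v k\<bar> + 1)) * \<bar>v k\<bar>"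
      unfolding ep_def by (intro mult_right_mono) auto
    also have "\<dots> = del * u0 k * (\<bar>v k\<bar> / (2 * (\<bar>v k\<bar> + 1)))" by simp
    also have "\<dots> < del * u0 k * 1"
    proof (rule mult_strict_left_mono)
      show "\<bar>v k\<bar> / (2 * (\<bar>v k\<bar> + 1)) < 1" by (simp add: divide_less_eq)
      show "0 < del * u0 k" using del k by simp
    qed
    also have "\<dots> = del * u0 k" by simp
    finally show ?thesis .
  qed
  have epj: "ep * \<bar>v j\<bar> < del * (- u0 j)"
  proof -
    have "ep * \<bar>v j\<bar> \<le> del * (- u0 j) / (2 * (\<bar>v j\<bar> + 1)) * \<bar>v j\<bar>"
      unfolding ep_def by (intro mult_right_mono) auto
    also have "\<dots> = del * (- u0 j) * (\<bar>v j\<bar> / (2 * (\<bar>v j\<bar> + 1)))" by simp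
    also have "\<dots> < del * (- u0 j) * 1"
    proof (rule mult_strict_left_mono)
      show "\<bar>v j\<bar> / (2 * (\<bar>v j\<bar> + 1)) < 1" by (simp add: divide_less_eq)
      show "0 < del * (- u0 j)" using del j by (simp add: mult_pos_neg)
    qed
    also have "\<dots> = del * (- u0 j)" by simp
    finally show ?thesis .
  qed
  define h where "h x = Wf u0 v (fst x) (snd x) (ep * eta x)" for x :: "real \<times> real"
  define F where "F x = (dIfun p q r a b c (h x) (posp (h x)), dIfun p q r a b c (h x) (negp (h x)))" for x
  define S where "S = {del..2} \<times> {del..(2::real)}"
  have Eh: "Eok (h x)" for x unfolding h_def by (rule Eok_Wf[OF E V])
  obtain M where M: "M summable_on UNIV" and Mb: "\<And>n w z. \<bar>fdiff w n\<bar> \<le> 2 * e1 u0 v n \<Longrightarrow> \<bar>fdiff z n\<bar> \<le> 2 * e1 u0 v n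
            \<Longrightarrow> \<bar>w n\<bar> \<le> 2 * e0 u0 v n \<Longrightarrow> \<bar>z n\<bar> \<le> 2 * e0 u0 v n \<Longrightarrow> \<bar>Dt w z n\<bar> \<le> M n"
    using env[OF E V, of 2] by auto
  have hb: "\<bar>fdiff (h x) n\<bar> \<le> 2 * e1 u0 v n \<and> \<bar>h x n\<bar> \<le> 2 * e0 u0 v n" if "x \<in> S" for x n
  proof -
    have b: "\<bar>fst x\<bar> \<le> 2" "\<bar>snd x\<bar> \<le> 2" "\<bar>ep * eta x\<bar> \<le> 2"
    proof -
      show "\<bar>fst x\<bar> \<le> 2" "\<bar>snd x\<bar> \<le> 2" using that del unfolding S_def by auto
      have h1: "ep * eta x \<le> ep * 1" using ep eta[of x] by (intro mult_left_mono) auto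
      have h0: "0 \<le> ep * eta x" using ep eta[of x] by simp
      show "\<bar>ep * eta x\<bar> \<le> 2" using abs_of_nonneg[OF h0] h1 ep rh by linarith
    qed
    have upm: "\<bar>posp u0 n\<bar> + \<bar>negp u0 n\<bar> = \<bar>u0 n\<bar>" by (simp add: posp_def negp_def max_def min_def)
    show ?thesis
      unfolding h_def fdiff_Wf Wf_app e1_def e0_def
      using lin3_bound[OF b, of "fdiff (posp u0) n" "fdiff (negp u0) n" "fdiff v n"]
            lin3_bound[OF b, of "posp u0 n" "negp u0 n" "v n"] upm by simp
  qed
  have contF: "continuous_on S F"
  proof -
    have ceta: "continuous_on S eta" unfolding eta_def using rh by (intro continuous_intros) auto
    define H where "H m x = fst x * posp u0 m + snd x * negp u0 m - ep * eta x * v m" for m x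
    have cH: "continuous_on S (H m)" for m unfolding H_def by (intro continuous_intros ceta)
    have hH: "h x m = H m x" for x m unfolding h_def H_def by (simp add: Wf_app)
    have c1: "continuous_on S (\<lambda>x. infsum (\<lambda>n. Dt (h x) (posp (h x)) n) UNIV)"
    proof (rule cont_sum[OF M])
      fix n x assume x: "x \<in> S"
      show "\<bar>Dt (h x) (posp (h x)) n\<bar> \<le> M n"
      proof (rule Mb)
        show "\<bar>fdiff (h x) n\<bar> \<le> 2 * e1 u0 v n" using hb[OF x] by simp
        show "\<bar>fdiff (posp (h x)) n\<bar> \<le> 2 * e1 u0 v n" using hb[OF x, of n] fdiff_posp[of "h x" n] by linarith
        show "\<bar>h x n\<bar> \<le> 2 * e0 u0 v n" using hb[OF x] by simp
        show "\<bar>posp (h x) n\<bar> \<le> 2 * e0 u0 v n" using hb[OF x, of n] by (auto simp: posp_def abs_le_iff)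
      qed
    next
      fix n
      have "(\<lambda>x. Dt (h x) (posp (h x)) n) = (\<lambda>x. a n * (H (n+1) x - H n x)^(P-1) * (max (H (n+1) x) 0 - max (H n x) 0)
          + b n * (H n x)^(P-1) * max (H n x) 0 - c n * Lf (H n x) * max (H n x) 0)"
        by (rule ext) (simp add: Dt_def fdiff_def posp_def hH)
      moreover have "continuous_on S (\<lambda>x. a n * (H (n+1) x - H n x)^(P-1) * (max (H (n+1) x) 0 - max (H n x) 0)
          + b n * (H n x)^(P-1) * max (H n x) 0 - c n * Lf (H n x) * max (H n x) 0)"
        by (intro continuous_intros cH Lf_cont_comp)
      ultimately show "continuous_on S (\<lambda>x. Dt (h x) (posp (h x)) n)" by metis
    qed
    have c2: "continuous_on S (\<lambda>x. infsum (\<lambda>n. Dt (h x) (negp (h x)) n) UNIV)"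
    proof (rule cont_sum[OF M])
      fix n x assume x: "x \<in> S"
      show "\<bar>Dt (h x) (negp (h x)) n\<bar> \<le> M n"
      proof (rule Mb)
        show "\<bar>fdiff (h x) n\<bar> \<le> 2 * e1 u0 v n" using hb[OF x] by simp
        show "\<bar>fdiff (negp (h x)) n\<bar> \<le> 2 * e1 u0 v n" using hb[OF x, of n] fdiff_negp[of "h x" n] by linarith
        show "\<bar>h x n\<bar> \<le> 2 * e0 u0 v n" using hb[OF x] by simp
        show "\<bar>negp (h x) n\<bar> \<le> 2 * e0 u0 v n" using hb[OF x, of n] by (auto simp: negp_def abs_le_iff)
      qed
    next
      fix n
      have "(\<lambda>x. Dt (h x) (negp (h x)) n) = (\<lambda>x. a n * (H (n+1) x - H n x)^(P-1) * (min (H (n+1) x) 0 - min (H n x) 0)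
          + b n * (H n x)^(P-1) * min (H n x) 0 - c n * Lf (H n x) * min (H n x) 0)"
        by (rule ext) (simp add: Dt_def fdiff_def negp_def hH)
      moreover have "continuous_on S (\<lambda>x. a n * (H (n+1) x - H n x)^(P-1) * (min (H (n+1) x) 0 - min (H n x) 0)
          + b n * (H n x)^(P-1) * min (H n x) 0 - c n * Lf (H n x) * min (H n x) 0)"
        by (intro continuous_intros cH Lf_cont_comp)
      ultimately show "continuous_on S (\<lambda>x. Dt (h x) (negp (h x)) n)" by metis
    qed
    have "F = (\<lambda>x. (infsum (\<lambda>n. Dt (h x) (posp (h x)) n) UNIV, infsum (\<lambda>n. Dt (h x) (negp (h x)) n) UNIV))"
      by (rule ext) (simp add: F_def dIfun_eq[OF Eh Eok_posp[OF Eh]] dIfun_eq[OF Eh Eok_negp[OF Eh]])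
    thus ?thesis using continuous_on_Pair[OF c1 c2] by simp
  qed
  have hbd: "h x = gam u0 (fst x) (snd x)" if "\<bar>fst x - 1\<bar> \<ge> 1/2 \<or> \<bar>snd x - 1\<bar> \<ge> 1/2" for x
    unfolding h_def eta_bd[OF that] by (simp add: Wf0)
  have "\<exists>s t. del \<le> s \<and> s \<le> 2 \<and> del \<le> t \<and> t \<le> 2 \<and> F (s,t) = (0,0)"
  proof (rule miranda)
    show "del < 2" using del by simp
    show "continuous_on ({del..2} \<times> {del..2}) F" using contF unfolding S_def .
    fix t assume t: "del \<le> t" "t \<le> 2"
    have t0: "0 < t" using t del by simp
    have hx: "h (del, t) = gam u0 del t" using hbd[of "(del, t)"] del by simp
    show "fst (F (del, t)) > 0" unfolding F_def fst_conv hx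
      by (rule B1) (use del t0 in auto)
    have hx2: "h (2, t) = gam u0 2 t" using hbd[of "(2, t)"] by simp
    show "fst (F (2, t)) < 0" unfolding F_def fst_conv hx2
      by (rule BL2[OF E nzp N1]) (use t t0 in auto)
  next
    fix s assume s: "del \<le> s" "s \<le> 2"
    have s0: "0 < s" using s del by simp
    have hx: "h (s, del) = gam u0 s del" using hbd[of "(s, del)"] del by simp
    show "snd (F (s, del)) > 0" unfolding F_def snd_conv hx negp_gam_eq
      by (rule B2) (use del s0 in auto)
    have hx2: "h (s, 2) = gam u0 s 2" using hbd[of "(s, 2)"] by simp
    show "snd (F (s, 2)) < 0" unfolding F_def snd_conv hx2 negp_gam_eq
      by (rule BL2[OF Eun nzun Nun]) (use s s0 in auto)
  qed
  then obtain s t where st: "del \<le> s" "s \<le> 2" "del \<le> t" "t \<le> 2" and F0: "F (s,t) = (0,0)" by blast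
  define hs where "hs = h (s,t)"
  have s0: "0 < s" "0 < t" using st del by auto
  have eps_le: "ep * eta (s,t) * \<bar>v n\<bar> \<le> ep * \<bar>v n\<bar>" for n
    using ep eta[of "(s,t)"] by (intro mult_right_mono) (auto intro: mult_right_le_one_le)
  have hsk: "0 < hs k"
  proof -
    have "hs k = s * u0 k - ep * eta (s,t) * v k"
      unfolding hs_def h_def Wf_app using pos_case[of u0 k] k by simp
    moreover have "del * u0 k \<le> s * u0 k" using st k by (intro mult_right_mono) auto
    moreover have "ep * eta (s,t) * v k \<le> ep * eta (s,t) * \<bar>v k\<bar>"
      using ep eta[of "(s,t)"] by (intro mult_left_mono) auto
    ultimately show ?thesis using eps_le[of k] epk by linarith
  qed
  have hsj: "hs j < 0"
  proof -
    have "hs j = t * u0 j - ep * eta (s,t) * v j"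
      unfolding hs_def h_def Wf_app using neg_case[of u0 j] j by simp
    moreover have "t * u0 j \<le> del * u0 j" using st j by (intro mult_right_mono_neg) auto
    moreover have "- (ep * eta (s,t) * v j) \<le> ep * eta (s,t) * \<bar>v j\<bar>"
    proof -
      have "- v j \<le> \<bar>v j\<bar>" by simp
      thus ?thesis using ep eta[of "(s,t)"] by (metis mult_left_mono mult_minus_right mult_nonneg_nonneg less_imp_le)
    qed
    ultimately show ?thesis using eps_le[of j] epj by linarith
  qed
  have hsM: "hs \<in> Mset p q r a b c"
    unfolding Mset_def
  proof (intro CollectI conjI)
    show "hs \<in> Dspace p q r a b c" unfolding hs_def by (rule Eok_Dspace[OF Eh])
    show "posp hs \<noteq> (\<lambda>_. 0)"
    proof
      assume "posp hs = (\<lambda>_. 0)"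
      hence "posp hs k = 0" by simp
      thus False using hsk by (simp add: posp_def)
    qed
    show "negp hs \<noteq> (\<lambda>_. 0)"
    proof
      assume "negp hs = (\<lambda>_. 0)"
      hence "negp hs j = 0" by simp
      thus False using hsj by (simp add: negp_def)
    qed
    show "dIfun p q r a b c hs (posp hs) = 0" "dIfun p q r a b c hs (negp hs) = 0"
      using F0 unfolding F_def hs_def by auto
  qed
  have less: "Ifun p q r a b c hs < m"
  proof (cases "0 < eta (s,t)")
    case True
    have c: "\<bar>s - 1\<bar> < rh" "\<bar>t - 1\<bar> < rh" using eta_pos[OF True] by auto
    have x: "0 \<le> ep * eta (s,t)" "ep * eta (s,t) < rho"
    proof -
      show "0 \<le> ep * eta (s,t)" using ep eta by simp
      have "ep * eta (s,t) \<le> ep * 1" using ep eta[of "(s,t)"] by (intro mult_left_mono) auto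
      thus "ep * eta (s,t) < rho" using ep rh by linarith
    qed
    have "Ifun p q r a b c hs \<le> Ifun p q r a b c (gam u0 s t) - ep * eta (s,t) * (d / 2)"
      unfolding hs_def h_def fst_conv snd_conv
      by (rule DSr) (use c rh x in auto)
    also have "\<dots> < Ifun p q r a b c (gam u0 s t)" using ep True d by simp
    also have "\<dots> \<le> m" by (rule SM1[OF s0])
    finally show ?thesis .
  next
    case False
    hence e0: "eta (s,t) = 0" using eta[of "(s,t)"] by simp
    hence "(s,t) \<noteq> (1,1)" using eta11 by auto
    moreover have "hs = gam u0 s t" unfolding hs_def h_def e0 by (simp add: Wf0)
    ultimately show ?thesis using SM2[OF s0] by simp
  qed
  have bdd: "bdd_below (Ifun p q r a b c ` Mset p q r a b c)"
    by (rule bdd_belowI[of _ 0]) (use NN in auto)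
  have "m \<le> Ifun p q r a b c hs" unfolding m_def u0min by (rule cINF_lower[OF bdd hsM])
  thus False using less by simp
qed

end

theorem lemma2p10:
  fixes p q r :: real and a b c :: "int \<Rightarrow> real" and u0 :: "int \<Rightarrow> real"
  assumes "1 < p" and "p < q" and "p / 2 \<in> \<nat>" and "p / 2 > 0" and "r \<ge> 1"
    and "\<And>n. a n > 0" and "\<And>n. b n > 0" and "\<And>n. c n > 0"
    and C1: "\<exists>b0>0. \<forall>n. b n \<ge> b0" "filterlim b at_top at_top" "filterlim b at_top at_bot"
    and C2: "\<exists>c0>0. \<forall>n. c n \<le> c0" "c summable_on UNIV"
    and u0M: "u0 \<in> Mset p q r a b c"
    and u0min: "Ifun p q r a b c u0 = (INF u \<in> Mset p q r a b c. Ifun p q r a b c u)"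
  shows "\<forall>v \<in> Dspace p q r a b c. dIfun p q r a b c u0 v = 0"
proof -
  obtain k :: nat where k: "p / 2 = real k" using assms(3) by (auto elim: Nats_cases)
  define P where "P = 2 * k"
  have pP: "p = real P" using k unfolding P_def by simp
  have evP: "even P" unfolding P_def by simp
  have P2: "2 \<le> P" using k assms(4) unfolding P_def by simp
  obtain b0 where b0: "b0 > 0" "\<And>n. b n \<ge> b0" using C1(1) by blast
  interpret LS p q r P a b c b0
    by unfold_locales (use pP evP P2 assms(2,5,6,7,8) b0 C2(2) in auto)
  show ?thesis by (rule main[OF u0M u0min])
qed

end
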